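(* Let $\sigma:[0,\infty)\to[0,\infty)$ be nondecreasing with $\lim_{t\to\infty}\sigma(t)=\infty$ and let $\beta\ge0$. Take $a\ge0$ such that $\sigma(x)>0$ for all $x\ge a$ and $\sigma(x)=0$ for every $x\le\lceil a\rceil-1$. Then the following are equivalent: (i) there exists $C>0$ such that $\int_1^{y}\frac{\sigma(t)}{t^{\beta+1}}\,dt\le C\frac{\sigma(y)}{y^{\beta}}$ for all $y\ge1$; (ii) $\lim_{k\to\infty}\liminf_{t\to\infty}\frac{\sigma(kt)}{k^{\beta}\sigma(t)}=\infty$; (iii) there exists $K>1$ such that $\liminf_{t\to\infty}\frac{\sigma(Kt)}{\sigma(t)}>K^{\beta}$; (iv) $\beta(\sigma)>\beta$; (v) there exists $\gamma>\beta$ such that $t\mapsto\sigma(t)/t^{\gamma}$ is almost increasing in $[a,\infty)$ if $a>0$, and in $[\varepsilon,\infty)$ for all $\varepsilon>0$ if $a=0$; (vi) there exists $C>0$ such that $\frac{1}{y^{\beta}}\int_y^{\infty}\frac{t^{\beta-1}}{\sigma(t)}\,dt\le\frac{C}{\sigma(y)}$ for all $y\ge a$ if $a>0$, and for all $y\ge\varepsilon$ if $a=0$, where $\varepsilon>0$ is arbitrary but fixed and $C$ depends on $\varepsilon$; (vii) there exists $C>0$ such that $\sum_{k=p}^{\infty}\frac{k^{\beta-1}}{\sigma(k)}\le C\frac{p^{\beta}}{\sigma(p)}$ for every $p\in\mathbb{N}$ with $p\ge a$; (viii) for every $\theta\in(0,1)$ there exists $k\in\mathbb{N}$, $k\ge2$,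 such that $\sigma(p)\le\theta k^{-\beta}\sigma(kp)$ for every $p\in\mathbb{N}$; (ix) there exists $k\in\mathbb{N}$, $k\ge2$, such that $\liminf_{p\in\mathbb{N},\,p\to\infty}\frac{\sigma(kp)}{\sigma(p)}>k^{\beta}$; (x) there exists $C>0$ such that $\sum_{k=1}^{p}\frac{\sigma(k)}{k^{1+\beta}}\le C\frac{\sigma(p)}{p^{\beta}}$ for every $p\in\mathbb{N}$.
   Context: $\mathbb{N}=\{1,2,\dots\}$, $\lceil x\rceil=\min\{k\in\mathbb{Z}:x\le k\}$. A function $h$ on $[a,\infty)$ is almost increasing if there is $M>0$ with $h(x)\le M h(y)$ for all $a\le x\le y$. For a measurable positive function $f$ on some $[A,\infty)$, its lower Matuszewska index is $\beta(f):=\sup\{\beta\in\mathbb{R}:\exists D_\beta>0\ \forall\Lambda>1,\ \liminf_{x\to\infty}\inf_{\lambda\in[1,\Lambda]}\frac{f(\lambda x)}{\lambda^{\beta}f(x)}\ge D_\beta\}$ (with $\sup\emptyset=-\infty$); for $\sigma$ as in the claim, $\beta(\sigma)$ means the index of the restriction of $\sigma$ to any $[A,\infty)$ with $A>0$ on which $\sigma>0$ (independent of $A$). *)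

theory Defs
  imports "HOL-Analysis.Analysis"
begin

definition almost_increasing_on :: "real set \<Rightarrow> (real \<Rightarrow> real) \<Rightarrow> bool" where
  "almost_increasing_on S h \<longleftrightarrow>
     (\<exists>M>0. \<forall>x\<in>S. \<forall>y\<in>S. x \<le> y \<longrightarrow> h x \<le> M * h y)"

text \<open>Lower Matuszewska index (with sup of the empty set = -infinity, hence in ereal).\<close>
definition lower_matuszewska :: "(real \<Rightarrow> real) \<Rightarrow> ereal" where
  "lower_matuszewska f = Sup {ereal b | b. \<exists>D>0. \<forall>\<Lambda>>1.
       Liminf at_top (\<lambda>x. INF l\<in>{1..\<Lambda>}. ereal (f (l * x) / (l powr b * f x))) \<ge> ereal D}"

end

theory Submission
  imports Defs
begin

locale sig =
  fixes \<sigma> :: "real \<Rightarrow> real" and \<beta> a :: real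
  assumes mono: "mono_on {0..} \<sigma>"
    and nonneg: "\<forall>x\<ge>0. \<sigma> x \<ge> 0"
    and beta: "\<beta> \<ge> 0"
    and a: "a \<ge> 0"
    and pos: "\<forall>x\<ge>a. \<sigma> x > 0"
begin

lemma sle: "0 \<le> x \<Longrightarrow> x \<le> y \<Longrightarrow> \<sigma> x \<le> \<sigma> y"
  using mono by (auto simp: mono_on_def)

lemma snn: "0 \<le> x \<Longrightarrow> 0 \<le> \<sigma> x" using nonneg by auto

lemma spos: "a \<le> x \<Longrightarrow> 0 < \<sigma> x" using pos by auto

lemma ext:
  assumes g: "\<gamma> \<ge> 0" and T: "T > 0" and ai: "almost_increasing_on {T..} (\<lambda>t. \<sigma> t / t powr \<gamma>)"
    and e: "e > 0"
  shows "almost_increasing_on {e..} (\<lambda>t. \<sigma> t / t powr \<gamma>)"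
proof -
  obtain M where M: "M > 0" "\<And>x y. T \<le> x \<Longrightarrow> x \<le> y \<Longrightarrow> \<sigma> x / x powr \<gamma> \<le> M * (\<sigma> y / y powr \<gamma>)"
    using ai unfolding almost_increasing_on_def by auto
  define W where "W = (max T e / e) powr \<gamma>"
  have W1: "W \<ge> 1" unfolding W_def using g e by (intro ge_one_powr_ge_zero) auto
  define M' where "M' = max M 1 * W"
  have key: "\<sigma> x / x powr \<gamma> \<le> (z / e) powr \<gamma> * (\<sigma> z / z powr \<gamma>)"
    if "e \<le> x" "x \<le> z" for x z
  proof -
    have "\<sigma> x / x powr \<gamma> \<le> \<sigma> z / e powr \<gamma>"
      using that e g snn[of x] sle[of x z]
      by (intro frac_le) (auto intro: powr_mono2)
    also have "\<dots> = (z / e) powr \<gamma> * (\<sigma> z / z powr \<gamma>)"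
      using that e by (simp add: powr_divide)
    finally show ?thesis .
  qed
  have hnn: "0 \<le> \<sigma> y / y powr \<gamma>" if "e \<le> y" for y using snn[of y] that e by auto
  show ?thesis unfolding almost_increasing_on_def
  proof (intro exI[of _ M'] conjI ballI impI)
    show "M' > 0" unfolding M'_def using W1 by auto
    fix x y assume x: "x \<in> {e..}" and y: "y \<in> {e..}" and xy: "x \<le> y"
    show "\<sigma> x / x powr \<gamma> \<le> M' * (\<sigma> y / y powr \<gamma>)"
    proof (cases "T \<le> x")
      case True
      have "\<sigma> x / x powr \<gamma> \<le> M * (\<sigma> y / y powr \<gamma>)" using M(2)[OF True xy] .
      also have "\<dots> \<le> M' * (\<sigma> y / y powr \<gamma>)"
        unfolding M'_def using W1 hnn[of y] y M(1)
        by (intro mult_right_mono) (auto intro: order_trans[of _ "max M 1"] simp: mult_le_cancel_left1)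
      finally show ?thesis .
    next
      case False
      show ?thesis
      proof (cases "y \<le> T")
        case True
        have "(y / e) powr \<gamma> \<le> W" unfolding W_def using True e x y g
          by (intro powr_mono2) (auto simp: divide_right_mono)
        hence "(y / e) powr \<gamma> * (\<sigma> y / y powr \<gamma>) \<le> M' * (\<sigma> y / y powr \<gamma>)"
          unfolding M'_def using hnn[of y] y W1
          by (intro mult_right_mono) (auto intro: order_trans[of _ W] simp: mult_le_cancel_right1)
        then show ?thesis using key[of x y] x xy by auto
      next
        case yT: False
        have "\<sigma> x / x powr \<gamma> \<le> (T / e) powr \<gamma> * (\<sigma> T / T powr \<gamma>)"
          using key[of x T] x False by auto
        also have "\<dots> \<le> (T / e) powr \<gamma> * (M * (\<sigma> y / y powr \<gamma>))"
          using M(2)[of T y] yT by (intro mult_left_mono) auto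
        also have "\<dots> = ((T / e) powr \<gamma> * M) * (\<sigma> y / y powr \<gamma>)" by simp
        also have "\<dots> \<le> M' * (\<sigma> y / y powr \<gamma>)"
        proof (rule mult_right_mono)
          have "max T e = T" using False x by auto
          hence W': "W = (T / e) powr \<gamma>" unfolding W_def by simp
          show "(T / e) powr \<gamma> * M \<le> M'" unfolding M'_def W' using W1 W'
            by (subst mult.commute, intro mult_right_mono) auto
        qed (use hnn[of y] y in auto)
        finally show ?thesis .
      qed
    qed
  qed
qed

end


context sig begin

lemma A_AI:
  assumes K: "K > 1" and c: "c > 1" and T: "T > 0"
    and A: "\<forall>t\<ge>T. c * K powr \<beta> * \<sigma> t \<le> \<sigma> (K*t)"
  shows "\<exists>\<gamma>>\<beta>. almost_increasing_on {T..} (\<lambda>t. \<sigma> t / t powr \<gamma>)"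
proof -
  define \<gamma> where "\<gamma> = \<beta> + ln c / ln K"
  have lc: "ln c > 0" "ln K > 0" using K c by auto
  have gb: "\<gamma> > \<beta>" unfolding \<gamma>_def using lc by auto
  have g0: "\<gamma> > 0" using gb beta by auto
  have Kg: "K powr \<gamma> = K powr \<beta> * c"
  proof -
    have "K powr (ln c / ln K) = c" using K c lc by (simp add: powr_def)
    thus ?thesis unfolding \<gamma>_def by (simp add: powr_add)
  qed
  define M where "M = K powr \<gamma>"
  have M0: "M > 0" unfolding M_def using K by simp
  have step: "\<sigma> x / x powr \<gamma> \<le> \<sigma> (K*x) / (K*x) powr \<gamma>" if x: "T \<le> x" for x
  proof -
    have xp: "x > 0" using x T by auto
    have "\<sigma> x / x powr \<gamma> = (c * K powr \<beta> * \<sigma> x) / (K * x) powr \<gamma>"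
      using xp K c by (simp add: powr_mult Kg)
    also have "\<dots> \<le> \<sigma> (K*x) / (K*x) powr \<gamma>"
      using A x xp K by (intro divide_right_mono) auto
    finally show ?thesis .
  qed
  have claim: "\<forall>x y. T \<le> x \<longrightarrow> x \<le> y \<longrightarrow> y < K^n * x \<longrightarrow> \<sigma> x / x powr \<gamma> \<le> M * (\<sigma> y / y powr \<gamma>)" for n
  proof (induction n)
    case 0
    then show ?case by auto
  next
    case (Suc n)
    show ?case
    proof (intro allI impI)
      fix x y assume x: "T \<le> x" and xy: "x \<le> y" and yK: "y < K ^ Suc n * x"
      have xp: "x > 0" using x T by auto
      show "\<sigma> x / x powr \<gamma> \<le> M * (\<sigma> y / y powr \<gamma>)"
      proof (cases "y < K * x")
        case True
        have "\<sigma> x / x powr \<gamma> \<le> \<sigma> y / x powr \<gamma>"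
          using sle[of x y] xp xy by (intro divide_right_mono) auto
        also have "\<dots> = M * (\<sigma> y / (K * x) powr \<gamma>)"
          unfolding M_def using xp K by (simp add: powr_mult)
        also have "\<dots> \<le> M * (\<sigma> y / y powr \<gamma>)"
          using M0 snn[of y] xp xy True g0 K
          by (intro mult_left_mono divide_left_mono powr_mono2) (auto intro: mult_pos_pos)
        finally show ?thesis .
      next
        case False
        have "x \<le> K * x" using xp K by (simp add: mult_le_cancel_right1)
        hence Kx: "T \<le> K * x" using x by linarith
        have "y < K ^ n * (K * x)" using yK by (simp add: mult_ac)
        hence "\<sigma> (K*x) / (K*x) powr \<gamma> \<le> M * (\<sigma> y / y powr \<gamma>)"
          using Suc.IH Kx False by auto
        then show ?thesis using step[OF x] by linarith
      qed
    qed
  qed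
  show ?thesis
  proof (intro exI[of _ \<gamma>] conjI gb)
    show "almost_increasing_on {T..} (\<lambda>t. \<sigma> t / t powr \<gamma>)"
      unfolding almost_increasing_on_def
    proof (intro exI[of _ M] conjI M0 ballI impI)
      fix x y assume x: "x \<in> {T..}" and y: "y \<in> {T..}" and xy: "x \<le> y"
      obtain n where n: "y / x < K ^ n" using real_arch_pow[OF K] by blast
      have "y < K ^ n * x" using n x T by (simp add: divide_less_eq)
      then show "\<sigma> x / x powr \<gamma> \<le> M * (\<sigma> y / y powr \<gamma>)" using claim[of n] x xy by auto
    qed
  qed
qed

end


context sig begin

definition Acond :: bool where
  "Acond \<longleftrightarrow> (\<exists>K c T. K > 1 \<and> c > 1 \<and> T > 0 \<and> (\<forall>t\<ge>T. c * K powr \<beta> * \<sigma> t \<le> \<sigma> (K*t)))"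

definition Bcond :: bool where
  "Bcond \<longleftrightarrow> (\<exists>\<gamma>>\<beta>. \<forall>e>0. almost_increasing_on {e..} (\<lambda>t. \<sigma> t / t powr \<gamma>))"

lemma A_B: "Acond \<Longrightarrow> Bcond"
proof -
  assume Acond
  then obtain K c T where KcT: "K > 1" "c > 1" "T > 0" "\<forall>t\<ge>T. c * K powr \<beta> * \<sigma> t \<le> \<sigma> (K*t)"
    unfolding Acond_def by blast
  from A_AI[OF KcT] obtain \<gamma> where g: "\<gamma> > \<beta>" "almost_increasing_on {T..} (\<lambda>t. \<sigma> t / t powr \<gamma>)"
    by blast
  show Bcond unfolding Bcond_def using g ext[of \<gamma> T] beta KcT(3) by (intro exI[of _ \<gamma>]) auto
qed

lemma lower_gamma:
  assumes ai: "almost_increasing_on S (\<lambda>t. \<sigma> t / t powr \<gamma>)" and S: "S \<subseteq> {0<..}"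
    and g: "\<gamma>' \<le> \<gamma>"
  shows "almost_increasing_on S (\<lambda>t. \<sigma> t / t powr \<gamma>')"
proof -
  obtain M where M: "M > 0" "\<And>x y. x \<in> S \<Longrightarrow> y \<in> S \<Longrightarrow> x \<le> y \<Longrightarrow> \<sigma> x / x powr \<gamma> \<le> M * (\<sigma> y / y powr \<gamma>)"
    using ai unfolding almost_increasing_on_def by blast
  show ?thesis unfolding almost_increasing_on_def
  proof (intro exI[of _ M] conjI M(1) ballI impI)
    fix x y assume x: "x \<in> S" and y: "y \<in> S" and xy: "x \<le> y"
    have xp: "x > 0" and yp: "y > 0" using x y S by auto
    have eq: "\<sigma> z / z powr \<gamma>' = (\<sigma> z / z powr \<gamma>) * z powr (\<gamma> - \<gamma>')" if "z > 0" for z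
      using that by (simp add: powr_diff)
    have "\<sigma> x / x powr \<gamma>' \<le> M * (\<sigma> y / y powr \<gamma>) * x powr (\<gamma> - \<gamma>')"
      unfolding eq[OF xp] by (intro mult_right_mono M(2) x y xy) auto
    also have "\<dots> \<le> M * (\<sigma> y / y powr \<gamma>) * y powr (\<gamma> - \<gamma>')"
      using M(1) snn[of y] yp xp xy g by (intro mult_left_mono powr_mono2) auto
    also have "\<dots> = M * (\<sigma> y / y powr \<gamma>')" unfolding eq[OF yp] by simp
    finally show "\<sigma> x / x powr \<gamma>' \<le> M * (\<sigma> y / y powr \<gamma>')" .
  qed
qed

lemma B_small:
  assumes Bcond
  shows "\<exists>\<gamma>. \<beta> < \<gamma> \<and> \<gamma> \<le> \<beta> + 1 \<and> (\<forall>e>0. almost_increasing_on {e..} (\<lambda>t. \<sigma> t / t powr \<gamma>))"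
proof -
  obtain \<gamma> where g: "\<gamma> > \<beta>" "\<forall>e>0. almost_increasing_on {e..} (\<lambda>t. \<sigma> t / t powr \<gamma>)"
    using assms unfolding Bcond_def by blast
  show ?thesis
    using g lower_gamma[of "{e..}" \<gamma> "min \<gamma> (\<beta> + 1)" for e]
    by (intro exI[of _ "min \<gamma> (\<beta>+1)"]) (auto simp: subset_eq)
qed

lemma NA_A:
  assumes L: "L \<ge> 1" and R: "R > 2 powr \<beta>" and P0: "P0 \<ge> 1"
    and NA: "\<forall>p::nat. real p \<ge> P0 \<longrightarrow> R * L powr \<beta> * \<sigma> (real p) \<le> \<sigma> (L * real p)"
  shows Acond
proof -
  have main: "R / 2 powr \<beta> * (2 * L) powr \<beta> * \<sigma> t \<le> \<sigma> (2 * L * t)" if t: "P0 \<le> t" for t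
  proof -
    define p where "p = nat \<lceil>t\<rceil>"
    have pt: "real p \<ge> t" "real p \<le> 2 * t" using t P0 unfolding p_def by linarith+
    have "R / 2 powr \<beta> * (2 * L) powr \<beta> * \<sigma> t = R * L powr \<beta> * \<sigma> t"
      by (simp add: powr_mult)
    also have "\<dots> \<le> R * L powr \<beta> * \<sigma> (real p)"
      using sle[of t "real p"] pt t P0 le_less_trans[OF powr_ge_zero R]
      by (intro mult_left_mono mult_nonneg_nonneg) auto
    also have "\<dots> \<le> \<sigma> (L * real p)" using NA pt t by auto
    also have "\<dots> \<le> \<sigma> (2 * L * t)"
      using sle[of "L * real p" "2*L*t"] pt L t P0 by (auto intro: mult_left_mono)
    finally show ?thesis .
  qed
  have "2 * L > 1" "P0 > 0" "R / 2 powr \<beta> > 1" using L P0 R by auto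
  then show ?thesis unfolding Acond_def using main by blast
qed

lemma NA_iter:
  assumes k: "k \<ge> 1" and c: "c \<ge> 0" and P0: "P0 \<ge> 0"
    and NA: "\<forall>p::nat. real p \<ge> P0 \<longrightarrow> c * real k powr \<beta> * \<sigma> (real p) \<le> \<sigma> (real k * real p)"
  shows "\<forall>p::nat. real p \<ge> P0 \<longrightarrow> c^m * real (k^m) powr \<beta> * \<sigma> (real p) \<le> \<sigma> (real (k^m) * real p)"
proof (induction m)
  case 0
  then show ?case by simp
next
  case (Suc m)
  show ?case
  proof (intro allI impI)
    fix p :: nat assume p: "real p \<ge> P0"
    have "1 \<le> k^m" using k by (simp add: one_le_power)
    hence "1 * p \<le> k^m * p" by (rule mult_le_mono1)
    hence p': "real (k^m * p) \<ge> P0" using p by (metis mult_1 of_nat_le_iff order.trans)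
    have "c ^ Suc m * real (k ^ Suc m) powr \<beta> * \<sigma> (real p)
        = (c * real k powr \<beta>) * (c^m * real (k^m) powr \<beta> * \<sigma> (real p))"
      by (simp add: powr_mult mult_ac)
    also have "\<dots> \<le> (c * real k powr \<beta>) * \<sigma> (real (k^m) * real p)"
      using Suc.IH p c by (intro mult_left_mono) auto
    also have "\<dots> \<le> \<sigma> (real k * real (k^m * p))" using NA[rule_format, OF p'] by simp
    finally show "c ^ Suc m * real (k ^ Suc m) powr \<beta> * \<sigma> (real p) \<le> \<sigma> (real (k ^ Suc m) * real p)"
      by (simp add: mult_ac)
  qed
qed

lemma NA_A':
  assumes k: "k \<ge> 1" and c: "c > 1" and P0: "P0 \<ge> 1"
    and NA: "\<forall>p::nat. real p \<ge> P0 \<longrightarrow> c * real k powr \<beta> * \<sigma> (real p) \<le> \<sigma> (real k * real p)"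
  shows Acond
proof -
  obtain m where m: "2 powr \<beta> < c ^ m" using real_arch_pow[OF c] by blast
  have NA': "\<forall>p::nat. real p \<ge> P0 \<longrightarrow> c^m * real (k^m) powr \<beta> * \<sigma> (real p) \<le> \<sigma> (real (k^m) * real p)"
    using NA_iter[OF k _ _ NA] c P0 by auto
  show ?thesis using NA_A[of "real (k^m)" "c^m" P0] NA' m P0 k by auto
qed

end


lemma pow_big:
  fixes d R :: real
  assumes d: "d > 0"
  shows "\<exists>X\<ge>1. \<forall>x\<ge>X. R \<le> x powr d"
proof -
  define X where "X = max 1 (\<bar>R\<bar> powr (1/d))"
  have "R \<le> x powr d" if x: "x \<ge> X" for x
  proof -
    have "\<bar>R\<bar> = (\<bar>R\<bar> powr (1/d)) powr d"
      using d by (cases "R = 0") (auto simp: powr_powr)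
    also have "\<dots> \<le> x powr d"
      using x d unfolding X_def by (intro powr_mono2) auto
    finally show ?thesis by linarith
  qed
  thus ?thesis unfolding X_def by (intro exI[of _ X]) (auto simp: X_def)
qed

lemma seq_inc:
  fixes A U :: "nat \<Rightarrow> real"
  assumes C: "C > 0" and g: "g > 0" and AU: "\<And>n. A n \<le> C * U n"
    and step: "\<And>n. A (Suc n) \<ge> A n + g * U n" and A0: "A 0 \<ge> 0"
  shows "U (Suc n) \<ge> (1 + g/C)^n * (g/C) * U 0"
proof -
  have Ug: "g * U n \<ge> (g/C) * A n" for n
    using AU[of n] C g by (simp add: field_simps mult_left_mono)
  have Anonneg: "A n \<ge> 0" for n
  proof (induction n)
    case 0 then show ?case using A0 .
  next
    case (Suc n)
    have "(g/C) * A n \<ge> 0" using Suc C g by auto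
    then show ?case using step[of n] Ug[of n] Suc by linarith
  qed
  have grow: "A (Suc n) \<ge> (1 + g/C)^n * A 1" for n
  proof (induction n)
    case 0 then show ?case by simp
  next
    case (Suc n)
    have "A (Suc (Suc n)) \<ge> A (Suc n) + (g/C) * A (Suc n)"
      using step[of "Suc n"] Ug[of "Suc n"] by linarith
    also have "A (Suc n) + (g/C) * A (Suc n) = (1 + g/C) * A (Suc n)" by algebra
    finally have "A (Suc (Suc n)) \<ge> (1 + g/C) * A (Suc n)" .
    moreover have "(1 + g/C) * A (Suc n) \<ge> (1 + g/C) * ((1 + g/C)^n * A 1)"
      using Suc C g by (intro mult_left_mono) auto
    ultimately show ?case by simp
  qed
  have A1: "A 1 \<ge> g * U 0" using step[of 0] A0 by simp
  have "(1 + g/C)^n * (g/C) * U 0 = ((1 + g/C)^n * (g * U 0)) / C" using C by simp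
  also have "\<dots> \<le> ((1 + g/C)^n * A 1) / C"
    using A1 C g by (intro divide_right_mono mult_left_mono) auto
  also have "\<dots> \<le> A (Suc n) / C" using grow[of n] C by (intro divide_right_mono) auto
  also have "\<dots> \<le> U (Suc n)" using AU[of "Suc n"] C by (simp add: field_simps)
  finally show ?thesis .
qed

lemma seq_dec:
  fixes B V :: "nat \<Rightarrow> real"
  assumes C: "C > 0" and g: "g > 0" and BV: "\<And>n. B n \<le> C * V n"
    and step: "\<And>n. B n \<ge> B (Suc n) + g * V (Suc n)" and Bnn: "\<And>n. B n \<ge> 0"
  shows "(1 + g/C)^n * (g/C) * V (Suc n) \<le> V 0"
proof -
  have Vg: "g * V n \<ge> (g/C) * B n" for n
    using BV[of n] C g by (simp add: field_simps mult_left_mono)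
  have dec: "(1 + g/C) * B (Suc n) \<le> B n" for n
    using step[of n] Vg[of "Suc n"] by (simp add: algebra_simps)
  have shrink: "(1 + g/C)^n * B n \<le> B 0" for n
  proof (induction n)
    case 0 then show ?case by simp
  next
    case (Suc n)
    have "(1 + g/C)^Suc n * B (Suc n) = (1 + g/C)^n * ((1 + g/C) * B (Suc n))" by simp
    also have "\<dots> \<le> (1 + g/C)^n * B n" using dec[of n] C g by (intro mult_left_mono) auto
    finally show ?case using Suc by linarith
  qed
  have "g * V (Suc n) \<le> B n" using step[of n] Bnn[of "Suc n"] by linarith
  hence "(1 + g/C)^n * (g * V (Suc n)) \<le> (1 + g/C)^n * B n"
    using C g by (intro mult_left_mono) auto
  also have "\<dots> \<le> B 0" by (rule shrink)
  also have "\<dots> \<le> C * V 0" by (rule BV)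
  finally have "(1 + g/C)^n * (g * V (Suc n)) \<le> C * V 0" .
  thus ?thesis using C by (simp add: field_simps)
qed

lemma geo_big:
  fixes g C R :: real
  assumes "C > 0" "g > 0"
  shows "\<exists>n. R < (1 + g/C)^n * (g/C)"
proof -
  have "1 < 1 + g/C" using assms by auto
  from real_arch_pow[OF this, of "R / (g/C)"] obtain n where "R / (g/C) < (1 + g/C)^n" by blast
  thus ?thesis using assms by (intro exI[of _ n]) (simp add: field_simps)
qed

context sig begin

lemma B_core:
  assumes Bcond
  shows "\<exists>\<gamma>>\<beta>. \<exists>M>0. \<forall>t\<ge>1. \<forall>k\<ge>1. k powr \<gamma> * \<sigma> t \<le> M * \<sigma> (k*t)"
proof -
  obtain \<gamma> where g: "\<gamma> > \<beta>" "almost_increasing_on {1..} (\<lambda>t. \<sigma> t / t powr \<gamma>)"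
    using assms unfolding Bcond_def by force
  obtain M where M: "M > 0" "\<And>x y. x \<in> {1..} \<Longrightarrow> y \<in> {1..} \<Longrightarrow> x \<le> y \<Longrightarrow> \<sigma> x / x powr \<gamma> \<le> M * (\<sigma> y / y powr \<gamma>)"
    using g(2) unfolding almost_increasing_on_def by blast
  have "k powr \<gamma> * \<sigma> t \<le> M * \<sigma> (k*t)" if t: "t \<ge> 1" and k: "k \<ge> 1" for t k
  proof -
    have kt: "t \<le> k * t" using t k by (simp add: mult_le_cancel_right1)
    have "\<sigma> t / t powr \<gamma> \<le> M * (\<sigma> (k*t) / (k*t) powr \<gamma>)"
      using M(2)[of t "k*t"] t kt by auto
    hence "\<sigma> t / t powr \<gamma> * (k*t) powr \<gamma> \<le> M * \<sigma> (k*t)"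
      using t k by (simp add: field_simps)
    thus ?thesis using t k by (simp add: powr_mult field_simps)
  qed
  thus ?thesis using g M by blast
qed

lemma P3_A:
  assumes K: "K > 1" and L: "Liminf at_top (\<lambda>t. ereal (\<sigma> (K * t) / \<sigma> t)) > ereal (K powr \<beta>)"
  shows Acond
proof -
  obtain c' where c': "K powr \<beta> < c'" "ereal c' < Liminf at_top (\<lambda>t. ereal (\<sigma> (K * t) / \<sigma> t))"
    using ereal_dense2[OF L] by auto
  have "eventually (\<lambda>t. ereal c' < ereal (\<sigma> (K * t) / \<sigma> t)) at_top"
    using less_LiminfD[OF c'(2)] by simp
  then obtain N where N: "\<And>t. t \<ge> N \<Longrightarrow> c' < \<sigma> (K * t) / \<sigma> t"
    unfolding eventually_at_top_linorder by auto
  define T where "T = max N (max a 1)"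
  have Kb: "K powr \<beta> > 0" using K by simp
  have "c' / K powr \<beta> * K powr \<beta> * \<sigma> t \<le> \<sigma> (K * t)" if t: "t \<ge> T" for t
  proof -
    have st: "\<sigma> t > 0" using spos[of t] t unfolding T_def by auto
    have "c' < \<sigma> (K * t) / \<sigma> t" using N[of t] t unfolding T_def by auto
    hence "c' * \<sigma> t \<le> \<sigma> (K * t)" using st by (simp add: field_simps)
    thus ?thesis using Kb by simp
  qed
  moreover have "c' / K powr \<beta> > 1" using c' Kb by simp
  moreover have "T > 0" unfolding T_def by auto
  ultimately show ?thesis unfolding Acond_def using K by blast
qed

lemma P2_A:
  assumes P2: "((\<lambda>k. Liminf at_top (\<lambda>t. ereal (\<sigma> (k * t) / (k powr \<beta> * \<sigma> t)))) \<longlongrightarrow> \<infinity>) at_top"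
  shows Acond
proof -
  have "eventually (\<lambda>k. ereal 2 < Liminf at_top (\<lambda>t. ereal (\<sigma> (k * t) / (k powr \<beta> * \<sigma> t)))) at_top"
    using P2 unfolding tendsto_PInfty by blast
  then obtain N where N: "\<And>k. k \<ge> N \<Longrightarrow> ereal 2 < Liminf at_top (\<lambda>t. ereal (\<sigma> (k * t) / (k powr \<beta> * \<sigma> t)))"
    unfolding eventually_at_top_linorder by auto
  define K where "K = max N 2"
  have K: "K > 1" unfolding K_def by auto
  have "eventually (\<lambda>t. ereal 2 < ereal (\<sigma> (K * t) / (K powr \<beta> * \<sigma> t))) at_top"
    using less_LiminfD[OF N[of K]] unfolding K_def by auto
  then obtain N2 where N2: "\<And>t. t \<ge> N2 \<Longrightarrow> 2 < \<sigma> (K * t) / (K powr \<beta> * \<sigma> t)"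
    unfolding eventually_at_top_linorder by auto
  define T where "T = max N2 (max a 1)"
  have Kb: "K powr \<beta> > 0" using K by simp
  have "2 * K powr \<beta> * \<sigma> t \<le> \<sigma> (K * t)" if t: "t \<ge> T" for t
  proof -
    have st: "\<sigma> t > 0" using spos[of t] t unfolding T_def by auto
    have "2 < \<sigma> (K * t) / (K powr \<beta> * \<sigma> t)" using N2[of t] t unfolding T_def by auto
    thus ?thesis using st Kb by (simp add: field_simps)
  qed
  moreover have "T > 0" unfolding T_def by auto
  ultimately show ?thesis unfolding Acond_def using K by (intro exI[of _ K] exI[of _ 2] exI[of _ T]) auto
qed

end


context sig begin

lemma P4_A:
  assumes P4: "lower_matuszewska \<sigma> > ereal \<beta>"
  shows Acond
proof -
  obtain x where x: "x \<in> {ereal b | b. \<exists>D>0. \<forall>\<Lambda>>1.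
       Liminf at_top (\<lambda>x. INF l\<in>{1..\<Lambda>}. ereal (\<sigma> (l * x) / (l powr b * \<sigma> x))) \<ge> ereal D}" "ereal \<beta> < x"
    using P4 unfolding lower_matuszewska_def less_Sup_iff by blast
  then obtain b D where bD: "ereal \<beta> < ereal b" "D > 0"
    "\<And>\<Lambda>. \<Lambda> > 1 \<Longrightarrow> Liminf at_top (\<lambda>x. INF l\<in>{1..\<Lambda>}. ereal (\<sigma> (l * x) / (l powr b * \<sigma> x))) \<ge> ereal D"
    by blast
  have bb: "b - \<beta> > 0" using bD by simp
  obtain X where X: "X \<ge> 1" "\<And>x. x \<ge> X \<Longrightarrow> 4 / D \<le> x powr (b - \<beta>)"
    using pow_big[OF bb, of "4/D"] by blast
  define K where "K = X + 1"
  have K: "K > 1" "4 / D \<le> K powr (b - \<beta>)" using X unfolding K_def by auto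
  have "ereal (D/2) < Liminf at_top (\<lambda>x. INF l\<in>{1..K}. ereal (\<sigma> (l * x) / (l powr b * \<sigma> x)))"
    using bD(2) by (intro less_le_trans[OF _ bD(3)[OF K(1)]]) simp
  from less_LiminfD[OF this] obtain N where N:
    "\<And>x. x \<ge> N \<Longrightarrow> ereal (D/2) < (INF l\<in>{1..K}. ereal (\<sigma> (l * x) / (l powr b * \<sigma> x)))"
    unfolding eventually_at_top_linorder by auto
  define T where "T = max N (max a 1)"
  have Kb: "K powr \<beta> > 0" "K powr b > 0" using K by auto
  define c where "c = D/2 * K powr (b - \<beta>)"
  have c1: "c > 1"
  proof -
    have "D/2 * (4/D) \<le> c" unfolding c_def using K bD(2) by (intro mult_left_mono) auto
    thus ?thesis using bD(2) by simp
  qed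
  have "c * K powr \<beta> * \<sigma> t \<le> \<sigma> (K * t)" if t: "t \<ge> T" for t
  proof -
    have st: "\<sigma> t > 0" using spos[of t] t unfolding T_def by auto
    have "ereal (D/2) < (INF l\<in>{1..K}. ereal (\<sigma> (l * t) / (l powr b * \<sigma> t)))"
      using N[of t] t unfolding T_def by auto
    also have "\<dots> \<le> ereal (\<sigma> (K * t) / (K powr b * \<sigma> t))"
      using K by (intro INF_lower) auto
    finally have "D/2 < \<sigma> (K * t) / (K powr b * \<sigma> t)" by simp
    hence "D/2 * (K powr b * \<sigma> t) \<le> \<sigma> (K * t)" using st Kb by (simp add: field_simps)
    moreover have "K powr b = K powr (b - \<beta>) * K powr \<beta>" by (simp flip: powr_add)
    ultimately show ?thesis unfolding c_def by (simp add: mult_ac)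
  qed
  moreover have "T > 0" unfolding T_def by auto
  ultimately show ?thesis unfolding Acond_def using K c1 by blast
qed

lemma P8_A:
  assumes P8: "\<forall>\<theta>. 0 < \<theta> \<and> \<theta> < 1 \<longrightarrow> (\<exists>k::nat. 2 \<le> k \<and>
              (\<forall>p::nat. 1 \<le> p \<longrightarrow> \<sigma> (real p) \<le> \<theta> * real k powr (- \<beta>) * \<sigma> (real k * real p)))"
  shows Acond
proof -
  obtain k :: nat where k: "2 \<le> k" "\<And>p::nat. 1 \<le> p \<Longrightarrow> \<sigma> (real p) \<le> 1/2 * real k powr (- \<beta>) * \<sigma> (real k * real p)"
    using P8[rule_format, of "1/2"] by auto
  have kb: "real k powr \<beta> > 0" using k by auto
  have "\<forall>p::nat. real p \<ge> 1 \<longrightarrow> 2 * real k powr \<beta> * \<sigma> (real p) \<le> \<sigma> (real k * real p)"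
  proof (intro allI impI)
    fix p :: nat assume p: "real p \<ge> 1"
    have "\<sigma> (real p) \<le> 1/2 * real k powr (- \<beta>) * \<sigma> (real k * real p)" using k(2)[of p] p by auto
    hence "2 * real k powr \<beta> * \<sigma> (real p) \<le> 2 * real k powr \<beta> * (1/2 * real k powr (- \<beta>) * \<sigma> (real k * real p))"
      using kb by (intro mult_left_mono) auto
    also have "\<dots> = \<sigma> (real k * real p)" using kb by (simp add: powr_minus field_simps)
    finally show "2 * real k powr \<beta> * \<sigma> (real p) \<le> \<sigma> (real k * real p)" .
  qed
  thus ?thesis using NA_A'[of k 2 1] k by auto
qed

lemma P9_A:
  assumes k: "2 \<le> k" and L: "Liminf sequentially (\<lambda>p::nat. ereal (\<sigma> (real k * real p) / \<sigma> (real p)))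
                > ereal (real k powr \<beta>)"
  shows Acond
proof -
  obtain c' where c': "real k powr \<beta> < c'" "ereal c' < Liminf sequentially (\<lambda>p::nat. ereal (\<sigma> (real k * real p) / \<sigma> (real p)))"
    using ereal_dense2[OF L] by auto
  from less_LiminfD[OF c'(2)] obtain N where N: "\<And>p. p \<ge> N \<Longrightarrow> c' < \<sigma> (real k * real p) / \<sigma> (real p)"
    unfolding eventually_sequentially by auto
  define P0 where "P0 = max (real N) (max a 1)"
  have kb: "real k powr \<beta> > 0" using k by auto
  have "\<forall>p::nat. real p \<ge> P0 \<longrightarrow> c' / real k powr \<beta> * real k powr \<beta> * \<sigma> (real p) \<le> \<sigma> (real k * real p)"
  proof (intro allI impI)
    fix p :: nat assume p: "real p \<ge> P0"
    have st: "\<sigma> (real p) > 0" using spos[of "real p"] p unfolding P0_def by auto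
    have "c' < \<sigma> (real k * real p) / \<sigma> (real p)" using N[of p] p unfolding P0_def by auto
    hence "c' * \<sigma> (real p) \<le> \<sigma> (real k * real p)" using st by (simp add: field_simps)
    thus "c' / real k powr \<beta> * real k powr \<beta> * \<sigma> (real p) \<le> \<sigma> (real k * real p)" using kb by simp
  qed
  moreover have "c' / real k powr \<beta> > 1" using c' kb by simp
  ultimately show ?thesis using NA_A'[of k "c' / real k powr \<beta>" P0] k unfolding P0_def by auto
qed

lemma B_P3:
  assumes Bcond
  shows "\<exists>K>1. Liminf at_top (\<lambda>t. ereal (\<sigma> (K * t) / \<sigma> t)) > ereal (K powr \<beta>)"
proof -
  obtain \<gamma> M where gM: "\<gamma> > \<beta>" "M > 0" "\<And>t k. t \<ge> 1 \<Longrightarrow> k \<ge> 1 \<Longrightarrow> k powr \<gamma> * \<sigma> t \<le> M * \<sigma> (k*t)"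
    using B_core[OF assms] by blast
  have gb: "\<gamma> - \<beta> > 0" using gM by simp
  obtain X where X: "X \<ge> 1" "\<And>x. x \<ge> X \<Longrightarrow> 2 * M \<le> x powr (\<gamma> - \<beta>)"
    using pow_big[OF gb, of "2*M"] by blast
  define K where "K = X + 1"
  have K: "K > 1" "2 * M \<le> K powr (\<gamma> - \<beta>)" using X unfolding K_def by auto
  have Kb: "K powr \<beta> > 0" using K by simp
  have "eventually (\<lambda>t. ereal (2 * K powr \<beta>) \<le> ereal (\<sigma> (K * t) / \<sigma> t)) at_top"
    unfolding eventually_at_top_linorder
  proof (intro exI[of _ "max a 1"] allI impI)
    fix t assume t: "max a 1 \<le> t"
    have st: "\<sigma> t > 0" using spos[of t] t by auto
    have "2 * M * K powr \<beta> * \<sigma> t \<le> K powr (\<gamma> - \<beta>) * K powr \<beta> * \<sigma> t"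
      using K st Kb by (intro mult_right_mono) auto
    also have "\<dots> = K powr \<gamma> * \<sigma> t" by (simp flip: powr_add)
    also have "\<dots> \<le> M * \<sigma> (K * t)" using gM(3)[of t K] t K by auto
    finally have "M * (2 * K powr \<beta> * \<sigma> t) \<le> M * \<sigma> (K * t)" by (simp add: mult_ac)
    hence "2 * K powr \<beta> * \<sigma> t \<le> \<sigma> (K * t)" using gM(2) by simp
    thus "ereal (2 * K powr \<beta>) \<le> ereal (\<sigma> (K * t) / \<sigma> t)" using st by (simp add: field_simps)
  qed
  hence LL: "ereal (2 * K powr \<beta>) \<le> Liminf at_top (\<lambda>t. ereal (\<sigma> (K * t) / \<sigma> t))"
    by (rule Liminf_bounded)
  have "ereal (K powr \<beta>) < ereal (2 * K powr \<beta>)" using Kb by simp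
  hence "ereal (K powr \<beta>) < Liminf at_top (\<lambda>t. ereal (\<sigma> (K * t) / \<sigma> t))"
    using LL by (rule less_le_trans)
  thus ?thesis using K by blast
qed

lemma B_P2:
  assumes Bcond
  shows "((\<lambda>k. Liminf at_top (\<lambda>t. ereal (\<sigma> (k * t) / (k powr \<beta> * \<sigma> t)))) \<longlongrightarrow> \<infinity>) at_top"
proof -
  obtain \<gamma> M where gM: "\<gamma> > \<beta>" "M > 0" "\<And>t k. t \<ge> 1 \<Longrightarrow> k \<ge> 1 \<Longrightarrow> k powr \<gamma> * \<sigma> t \<le> M * \<sigma> (k*t)"
    using B_core[OF assms] by blast
  have gb: "\<gamma> - \<beta> > 0" using gM by simp
  have lb: "ereal (k powr (\<gamma> - \<beta>) / M) \<le> Liminf at_top (\<lambda>t. ereal (\<sigma> (k * t) / (k powr \<beta> * \<sigma> t)))"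
    if k: "k \<ge> 1" for k
  proof (rule Liminf_bounded)
    have Kb: "k powr \<beta> > 0" using k by simp
    show "eventually (\<lambda>t. ereal (k powr (\<gamma> - \<beta>) / M) \<le> ereal (\<sigma> (k * t) / (k powr \<beta> * \<sigma> t))) at_top"
      unfolding eventually_at_top_linorder
    proof (intro exI[of _ "max a 1"] allI impI)
      fix t assume t: "max a 1 \<le> t"
      have st: "\<sigma> t > 0" using spos[of t] t by auto
      have "k powr (\<gamma> - \<beta>) * (k powr \<beta> * \<sigma> t) = k powr \<gamma> * \<sigma> t" by (simp add: mult_ac flip: powr_add)
      also have "\<dots> \<le> M * \<sigma> (k * t)" using gM(3)[of t k] t k by auto
      finally show "ereal (k powr (\<gamma> - \<beta>) / M) \<le> ereal (\<sigma> (k * t) / (k powr \<beta> * \<sigma> t))"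
        using st Kb gM(2) by (simp add: field_simps)
    qed
  qed
  show ?thesis unfolding tendsto_PInfty
  proof
    fix r
    obtain X where X: "X \<ge> 1" "\<And>x. x \<ge> X \<Longrightarrow> (\<bar>r\<bar> + 1) * M \<le> x powr (\<gamma> - \<beta>)"
      using pow_big[OF gb, of "(\<bar>r\<bar> + 1) * M"] by blast
    show "eventually (\<lambda>k. ereal r < Liminf at_top (\<lambda>t. ereal (\<sigma> (k * t) / (k powr \<beta> * \<sigma> t)))) at_top"
      unfolding eventually_at_top_linorder
    proof (intro exI[of _ X] allI impI)
      fix k assume k: "k \<ge> X"
      have "r < \<bar>r\<bar> + 1" by simp
      also have "\<bar>r\<bar> + 1 \<le> k powr (\<gamma> - \<beta>) / M" using X(2)[OF k] gM(2) by (simp add: field_simps)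
      finally have "ereal r < ereal (k powr (\<gamma> - \<beta>) / M)" by simp
      also have "\<dots> \<le> Liminf at_top (\<lambda>t. ereal (\<sigma> (k * t) / (k powr \<beta> * \<sigma> t)))"
        using lb[of k] k X by auto
      finally show "ereal r < Liminf at_top (\<lambda>t. ereal (\<sigma> (k * t) / (k powr \<beta> * \<sigma> t)))" .
    qed
  qed
qed

lemma B_P4:
  assumes Bcond
  shows "lower_matuszewska \<sigma> > ereal \<beta>"
proof -
  obtain \<gamma> M where gM: "\<gamma> > \<beta>" "M > 0" "\<And>t k. t \<ge> 1 \<Longrightarrow> k \<ge> 1 \<Longrightarrow> k powr \<gamma> * \<sigma> t \<le> M * \<sigma> (k*t)"
    using B_core[OF assms] by blast
  have "\<forall>\<Lambda>>1. Liminf at_top (\<lambda>x. INF l\<in>{1..\<Lambda>}. ereal (\<sigma> (l * x) / (l powr \<gamma> * \<sigma> x))) \<ge> ereal (1/M)"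
  proof (intro allI impI Liminf_bounded)
    fix \<Lambda> :: real assume "\<Lambda> > 1"
    show "eventually (\<lambda>x. ereal (1/M) \<le> (INF l\<in>{1..\<Lambda>}. ereal (\<sigma> (l * x) / (l powr \<gamma> * \<sigma> x)))) at_top"
      unfolding eventually_at_top_linorder
    proof (intro exI[of _ "max a 1"] allI impI INF_greatest)
      fix x l assume x: "max a 1 \<le> x" and l: "l \<in> {1..\<Lambda>}"
      have st: "\<sigma> x > 0" using spos[of x] x by auto
      have lp: "l powr \<gamma> > 0" using l by auto
      have "l powr \<gamma> * \<sigma> x \<le> M * \<sigma> (l * x)" using gM(3)[of x l] x l by auto
      thus "ereal (1/M) \<le> ereal (\<sigma> (l * x) / (l powr \<gamma> * \<sigma> x))"
        using st lp gM(2) by (simp add: field_simps)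
    qed
  qed
  hence "ereal \<gamma> \<in> {ereal b | b. \<exists>D>0. \<forall>\<Lambda>>1.
       Liminf at_top (\<lambda>x. INF l\<in>{1..\<Lambda>}. ereal (\<sigma> (l * x) / (l powr b * \<sigma> x))) \<ge> ereal D}"
    using gM(2) by (intro CollectI exI[of _ \<gamma>] conjI refl exI[of _ "1/M"]) auto
  hence "ereal \<gamma> \<le> lower_matuszewska \<sigma>" unfolding lower_matuszewska_def by (rule Sup_upper)
  moreover have "ereal \<beta> < ereal \<gamma>" using gM(1) by simp
  ultimately show ?thesis by (meson less_le_trans)
qed

lemma B_P8:
  assumes Bcond
  shows "\<forall>\<theta>. 0 < \<theta> \<and> \<theta> < 1 \<longrightarrow> (\<exists>k::nat. 2 \<le> k \<and>
              (\<forall>p::nat. 1 \<le> p \<longrightarrow> \<sigma> (real p) \<le> \<theta> * real k powr (- \<beta>) * \<sigma> (real k * real p)))"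
proof (intro allI impI)
  fix \<theta> :: real assume th: "0 < \<theta> \<and> \<theta> < 1"
  obtain \<gamma> M where gM: "\<gamma> > \<beta>" "M > 0" "\<And>t k. t \<ge> 1 \<Longrightarrow> k \<ge> 1 \<Longrightarrow> k powr \<gamma> * \<sigma> t \<le> M * \<sigma> (k*t)"
    using B_core[OF assms] by blast
  have gb: "\<gamma> - \<beta> > 0" using gM by simp
  obtain X where X: "X \<ge> 1" "\<And>x. x \<ge> X \<Longrightarrow> M / \<theta> \<le> x powr (\<gamma> - \<beta>)"
    using pow_big[OF gb, of "M / \<theta>"] by blast
  define k where "k = nat \<lceil>X\<rceil> + 2"
  have k: "real k \<ge> X" "k \<ge> 2" unfolding k_def by linarith+
  have "\<sigma> (real p) \<le> \<theta> * real k powr (- \<beta>) * \<sigma> (real k * real p)" if p: "1 \<le> p" for p :: nat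
  proof -
    have kp: "real k powr \<gamma> > 0" "real k powr \<beta> > 0" using k by auto
    have "real k powr \<gamma> * \<sigma> (real p) \<le> M * \<sigma> (real k * real p)" using gM(3)[of p k] p k by auto
    moreover have "real k powr \<gamma> = real k powr (\<gamma> - \<beta>) * real k powr \<beta>" by (simp flip: powr_add)
    moreover have "M / \<theta> \<le> real k powr (\<gamma> - \<beta>)" using X(2) k by auto
    ultimately have "M / \<theta> * (real k powr \<beta> * \<sigma> (real p)) \<le> M * \<sigma> (real k * real p)"
    proof -
      assume a1: "real k powr \<gamma> * \<sigma> (real p) \<le> M * \<sigma> (real k * real p)"
        and a2: "real k powr \<gamma> = real k powr (\<gamma> - \<beta>) * real k powr \<beta>"
        and a3: "M / \<theta> \<le> real k powr (\<gamma> - \<beta>)"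
      have "M / \<theta> * (real k powr \<beta> * \<sigma> (real p)) \<le> real k powr (\<gamma> - \<beta>) * (real k powr \<beta> * \<sigma> (real p))"
        using a3 kp snn[of "real p"] by (intro mult_right_mono) auto
      also have "\<dots> = real k powr \<gamma> * \<sigma> (real p)" using a2 by simp
      finally show ?thesis using a1 by linarith
    qed
    hence "M * (real k powr \<beta> * \<sigma> (real p)) \<le> M * (\<theta> * \<sigma> (real k * real p))"
      using th by (simp add: field_simps)
    hence "real k powr \<beta> * \<sigma> (real p) \<le> \<theta> * \<sigma> (real k * real p)" using gM(2) by simp
    thus ?thesis using kp by (simp add: powr_minus field_simps)
  qed
  thus "\<exists>k::nat. 2 \<le> k \<and> (\<forall>p::nat. 1 \<le> p \<longrightarrow> \<sigma> (real p) \<le> \<theta> * real k powr (- \<beta>) * \<sigma> (real k * real p))"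
    using k by blast
qed

lemma P8_P9:
  assumes P8: "\<forall>\<theta>. 0 < \<theta> \<and> \<theta> < 1 \<longrightarrow> (\<exists>k::nat. 2 \<le> k \<and>
              (\<forall>p::nat. 1 \<le> p \<longrightarrow> \<sigma> (real p) \<le> \<theta> * real k powr (- \<beta>) * \<sigma> (real k * real p)))"
  shows "\<exists>k::nat. 2 \<le> k \<and> Liminf sequentially (\<lambda>p::nat. ereal (\<sigma> (real k * real p) / \<sigma> (real p)))
                > ereal (real k powr \<beta>)"
proof -
  obtain k :: nat where k: "2 \<le> k" "\<And>p::nat. 1 \<le> p \<Longrightarrow> \<sigma> (real p) \<le> 1/2 * real k powr (- \<beta>) * \<sigma> (real k * real p)"
    using P8[rule_format, of "1/2"] by auto
  have kb: "real k powr \<beta> > 0" using k by auto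
  have "eventually (\<lambda>p. ereal (2 * real k powr \<beta>) \<le> ereal (\<sigma> (real k * real p) / \<sigma> (real p))) sequentially"
    unfolding eventually_sequentially
  proof (intro exI[of _ "nat \<lceil>a\<rceil> + 1"] allI impI)
    fix p :: nat assume p: "nat \<lceil>a\<rceil> + 1 \<le> p"
    have st: "\<sigma> (real p) > 0" using spos[of "real p"] p by linarith
    have "\<sigma> (real p) \<le> 1/2 * real k powr (- \<beta>) * \<sigma> (real k * real p)" using k(2)[of p] p by auto
    hence "2 * real k powr \<beta> * \<sigma> (real p) \<le> \<sigma> (real k * real p)"
      using kb by (simp add: powr_minus field_simps)
    thus "ereal (2 * real k powr \<beta>) \<le> ereal (\<sigma> (real k * real p) / \<sigma> (real p))"
      using st by (simp add: field_simps)
  qed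
  hence LL: "ereal (2 * real k powr \<beta>) \<le> Liminf sequentially (\<lambda>p::nat. ereal (\<sigma> (real k * real p) / \<sigma> (real p)))"
    by (rule Liminf_bounded)
  have "ereal (real k powr \<beta>) < ereal (2 * real k powr \<beta>)" using kb by simp
  hence "ereal (real k powr \<beta>) < Liminf sequentially (\<lambda>p::nat. ereal (\<sigma> (real k * real p) / \<sigma> (real p)))"
    using LL by (rule less_le_trans)
  thus ?thesis using k by blast
qed

end


lemma powr_has_integral_ivl:
  fixes d y :: real
  assumes d: "d > 0" and y: "1 \<le> y"
  shows "((\<lambda>t. t powr (d - 1)) has_integral (y powr d / d - 1 / d)) {1..y}"
proof -
  define F where "F \<equiv> \<lambda>x::real. x powr d / d"
  have "((\<lambda>x. x powr (d - 1)) has_integral (F y - F 1)) {1..y}"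
    unfolding F_def using assms
    by (intro fundamental_theorem_of_calculus)
       (auto intro!: derivative_eq_intros simp: field_simps powr_diff
             simp flip: has_real_derivative_iff_has_vector_derivative)
  thus ?thesis unfolding F_def by simp
qed

context sig begin

lemma sig_meas: "(\<lambda>t. \<sigma> (max 0 t)) \<in> borel_measurable borel"
proof (rule borel_measurable_mono)
  show "mono (\<lambda>t. \<sigma> (max 0 t))" unfolding mono_def using sle by auto
qed

lemma meas_leb1: "(\<lambda>t. \<sigma> (max 0 t) / t powr r) \<in> borel_measurable (lebesgue_on S)"
proof -
  have "(\<lambda>t. \<sigma> (max 0 t) / t powr r) \<in> borel_measurable borel"
    using sig_meas by measurable
  thus ?thesis by (simp add: measurable_completion measurable_restrict_space1)
qed

lemma meas_leb2: "(\<lambda>t. t powr r / \<sigma> (max 0 t)) \<in> borel_measurable (lebesgue_on S)"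
proof -
  have "(\<lambda>t. t powr r / \<sigma> (max 0 t)) \<in> borel_measurable borel"
    using sig_meas by measurable
  thus ?thesis by (simp add: measurable_completion measurable_restrict_space1)
qed

lemma int1:
  assumes u: "1 \<le> u"
  shows "(\<lambda>t. \<sigma> t / t powr r) integrable_on {u..v}"
proof -
  have "(\<lambda>t. \<sigma> (max 0 t) / t powr r) integrable_on {u..v}"
  proof (rule measurable_bounded_by_integrable_imp_integrable_real[OF meas_leb1])
    show "(\<lambda>_. \<sigma> (max 0 v) / u powr r + \<sigma> (max 0 v) / v powr r) integrable_on {u..v}" by auto
    fix t assume t: "t \<in> {u..v}"
    have st: "0 \<le> \<sigma> t" "\<sigma> t \<le> \<sigma> v" using snn sle t u by auto
    have "t powr r \<ge> min (u powr r) (v powr r)"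
    proof (cases "r \<ge> 0")
      case True thus ?thesis using t u by (auto intro!: powr_mono2 simp: min_def)
    next
      case False
      have "v powr r \<le> t powr r" using t u False by (intro powr_mono2') auto
      thus ?thesis by auto
    qed
    hence "\<sigma> t / t powr r \<le> \<sigma> v / min (u powr r) (v powr r)"
      using st t u by (intro frac_le) (auto simp: min_def)
    also have "\<dots> \<le> \<sigma> v / u powr r + \<sigma> v / v powr r" using st t u by (auto simp: min_def)
    finally show "\<bar>\<sigma> (max 0 t) / t powr r\<bar> \<le> \<sigma> (max 0 v) / u powr r + \<sigma> (max 0 v) / v powr r"
      using st t u by auto
  qed auto
  thus ?thesis by (rule integrable_eq) (use u in auto)
qed

lemma int2:
  assumes u: "0 < u" and su: "\<sigma> u > 0"
  shows "(\<lambda>t. t powr r / \<sigma> t) integrable_on {u..v}"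
proof -
  have "(\<lambda>t. t powr r / \<sigma> (max 0 t)) integrable_on {u..v}"
  proof (rule measurable_bounded_by_integrable_imp_integrable_real[OF meas_leb2])
    show "(\<lambda>_. u powr r / \<sigma> u + v powr r / \<sigma> u) integrable_on {u..v}" by auto
    fix t assume t: "t \<in> {u..v}"
    have st: "0 < \<sigma> u" "\<sigma> u \<le> \<sigma> t" using su sle t u by auto
    have "t powr r \<le> max (u powr r) (v powr r)"
    proof (cases "r \<ge> 0")
      case True thus ?thesis using t u by (auto intro!: powr_mono2 simp: max_def)
    next
      case False
      have "t powr r \<le> u powr r" using t u False by (intro powr_mono2') auto
      thus ?thesis by auto
    qed
    hence "t powr r / \<sigma> t \<le> max (u powr r) (v powr r) / \<sigma> u"
      using st t u by (intro frac_le) (auto simp: le_max_iff_disj)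
    also have "\<dots> \<le> u powr r / \<sigma> u + v powr r / \<sigma> u" using st by (auto simp: max_def)
    finally show "\<bar>t powr r / \<sigma> (max 0 t)\<bar> \<le> u powr r / \<sigma> u + v powr r / \<sigma> u"
      using st t u by auto
  qed auto
  thus ?thesis by (rule integrable_eq) (use u in auto)
qed

end


context sig begin

lemma P1_A:
  assumes C: "C > 0" and P1: "\<forall>y\<ge>1. integral {1..y} (\<lambda>t. \<sigma> t / t powr (\<beta> + 1)) \<le> C * \<sigma> y / y powr \<beta>"
  shows Acond
proof -
  define h where "h = (\<lambda>t. \<sigma> t / t powr (\<beta> + 1))"
  define g where "g = 1 / 2 powr (\<beta> + 1)"
  have g: "g > 0" unfolding g_def by simp
  obtain n where n: "1 < (1 + g/C)^n * (g/C)" using geo_big[OF C g] by blast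
  define \<rho> where "\<rho> = (1 + g/C)^n * (g/C)"
  define K :: real where "K = 2^(Suc n)"
  have K: "K > 1" unfolding K_def using one_less_power[of "2::real" "Suc n"] by simp
  have main: "\<rho> * K powr \<beta> * \<sigma> z \<le> \<sigma> (K * z)" if z: "z \<ge> 1" for z
  proof -
    define A where "A m = integral {1..(2::real)^m * z} h" for m
    define U where "U m = \<sigma> ((2::real)^m * z) / ((2::real)^m * z) powr \<beta>" for m
    have Nge: "(2::real)^m * z \<ge> 1" for m
      using z by (metis le_numeral_extra(4) mult_mono' one_le_numeral one_le_power zero_le_one
          mult_1 order_trans)
    have AU: "A m \<le> C * U m" for m
      using P1 Nge[of m] unfolding A_def U_def h_def by (simp add: mult_ac)
    have step: "A (Suc m) \<ge> A m + g * U m" for m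
    proof -
      define N where "N = (2::real)^m * z"
      have N: "N \<ge> 1" unfolding N_def using Nge .
      have N2: "(2::real)^Suc m * z = 2 * N" unfolding N_def by simp
      have "A (Suc m) = integral {1..N} h + integral {N..2*N} h"
        unfolding A_def N2 using N Henstock_Kurzweil_Integration.integral_combine[of 1 N "2*N" h]
          int1[of 1 "\<beta> + 1" "2*N"] unfolding h_def by simp
      moreover have "integral {1..N} h = A m" unfolding A_def N_def ..
      moreover have "integral {N..2*N} h \<ge> g * U m"
      proof -
        have "integral {N..2*N} (\<lambda>_. \<sigma> N / (2*N) powr (\<beta>+1)) \<le> integral {N..2*N} h"
        proof (rule integral_le)
          show "h integrable_on {N..2*N}" unfolding h_def using N by (intro int1) auto
          fix t assume t: "t \<in> {N..2*N}"
          show "\<sigma> N / (2*N) powr (\<beta>+1) \<le> h t" unfolding h_def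
            using t N snn[of N] sle[of N t] beta
            by (intro frac_le powr_mono2) auto
        qed auto
        moreover have "integral {N..2*N} (\<lambda>_. \<sigma> N / (2*N) powr (\<beta>+1)) = g * U m"
        proof -
          have e1: "integral {N..2*N} (\<lambda>_. \<sigma> N / (2*N) powr (\<beta>+1)) = N * (\<sigma> N / (2*N) powr (\<beta>+1))"
            using N by simp
          have e2: "(2*N) powr (\<beta>+1) = 2 powr (\<beta>+1) * (N powr \<beta> * N)"
            using N by (simp add: powr_mult powr_add)
          show ?thesis unfolding e1 e2 g_def U_def N_def[symmetric] using N by (simp add: field_simps)
        qed
        ultimately show ?thesis by simp
      qed
      ultimately show ?thesis by simp
    qed
    have A0: "A 0 \<ge> 0" unfolding A_def h_def using z
      by (intro integral_nonneg int1) (auto intro!: divide_nonneg_nonneg snn)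
    have "U (Suc n) \<ge> \<rho> * U 0" using seq_inc[OF C g AU step A0, of n] unfolding \<rho>_def by simp
    hence "\<sigma> (K * z) / (K * z) powr \<beta> \<ge> \<rho> * (\<sigma> z / z powr \<beta>)"
      unfolding U_def K_def by simp
    hence "\<sigma> (K * z) / (K powr \<beta> * z powr \<beta>) \<ge> \<rho> * (\<sigma> z / z powr \<beta>)"
      using K z by (simp add: powr_mult)
    thus ?thesis using K z by (simp add: field_simps)
  qed
  show ?thesis unfolding Acond_def using main K n unfolding \<rho>_def
    by (intro exI[of _ K] exI[of _ \<rho>] exI[of _ 1]) (auto simp: \<rho>_def)
qed

lemma B_P1:
  assumes Bcond
  shows "\<exists>C>0. \<forall>y\<ge>1. integral {1..y} (\<lambda>t. \<sigma> t / t powr (\<beta> + 1)) \<le> C * \<sigma> y / y powr \<beta>"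
proof -
  obtain \<gamma> where g: "\<gamma> > \<beta>" "almost_increasing_on {1..} (\<lambda>t. \<sigma> t / t powr \<gamma>)"
    using assms unfolding Bcond_def by force
  obtain M where M: "M > 0" "\<And>x y. x \<in> {1..} \<Longrightarrow> y \<in> {1..} \<Longrightarrow> x \<le> y \<Longrightarrow> \<sigma> x / x powr \<gamma> \<le> M * (\<sigma> y / y powr \<gamma>)"
    using g(2) unfolding almost_increasing_on_def by blast
  define \<delta> where "\<delta> = \<gamma> - \<beta>"
  have d: "\<delta> > 0" unfolding \<delta>_def using g by simp
  have "integral {1..y} (\<lambda>t. \<sigma> t / t powr (\<beta> + 1)) \<le> M / \<delta> * \<sigma> y / y powr \<beta>" if y: "y \<ge> 1" for y
  proof -
    define c where "c = M * (\<sigma> y / y powr \<gamma>)"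
    have c0: "c \<ge> 0" unfolding c_def using M snn[of y] y by auto
    have I: "((\<lambda>t. c * t powr (\<delta> - 1)) has_integral (c * (y powr \<delta> / \<delta> - 1 / \<delta>))) {1..y}"
      by (intro has_integral_mult_right powr_has_integral_ivl d y)
    have "integral {1..y} (\<lambda>t. \<sigma> t / t powr (\<beta> + 1)) \<le> integral {1..y} (\<lambda>t. c * t powr (\<delta> - 1))"
    proof (rule integral_le)
      show "(\<lambda>t. \<sigma> t / t powr (\<beta> + 1)) integrable_on {1..y}" by (intro int1) auto
      show "(\<lambda>t. c * t powr (\<delta> - 1)) integrable_on {1..y}" using I by blast
      fix t assume t: "t \<in> {1..y}"
      have "\<sigma> t / t powr (\<beta> + 1) = (\<sigma> t / t powr \<gamma>) * t powr (\<delta> - 1)"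
        using t unfolding \<delta>_def by (simp add: powr_diff powr_add field_simps)
      also have "\<dots> \<le> c * t powr (\<delta> - 1)" unfolding c_def
        using M(2)[of t y] t by (intro mult_right_mono) auto
      finally show "\<sigma> t / t powr (\<beta> + 1) \<le> c * t powr (\<delta> - 1)" .
    qed
    also have "\<dots> = c * (y powr \<delta> / \<delta> - 1 / \<delta>)" using I by (rule integral_unique)
    also have "\<dots> \<le> c * (y powr \<delta> / \<delta>)" using c0 d by (intro mult_left_mono) auto
    also have "\<dots> = M / \<delta> * \<sigma> y / y powr \<beta>"
    proof -
      have "y powr \<gamma> = y powr \<delta> * y powr \<beta>" unfolding \<delta>_def by (simp flip: powr_add)
      thus ?thesis unfolding c_def using y d by (simp add: field_simps)
    qed
    finally show ?thesis .
  qed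
  thus ?thesis using M d by (intro exI[of _ "M/\<delta>"]) auto
qed

end


lemma mvt_powr:
  fixes x y r :: real
  assumes "0 < x" "x < y"
  shows "\<exists>\<xi>. x < \<xi> \<and> \<xi> < y \<and> y powr r - x powr r = (y - x) * (r * \<xi> powr (r - 1))"
proof -
  have "\<exists>z. x < z \<and> z < y \<and> (y powr r - x powr r = (y - x) * (r * z powr (r - 1)))"
  proof (rule MVT2[OF assms(2)])
    fix z assume "x \<le> z" "z \<le> y"
    hence "z > 0" using assms by auto
    thus "((\<lambda>t. t powr r) has_real_derivative r * z powr (r - 1)) (at z)"
      by (rule has_real_derivative_powr)
  qed
  thus ?thesis by blast
qed

lemma concave_step:
  fixes x d :: real
  assumes d: "0 < d" "d \<le> 1" and x: "x \<ge> 1"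
  shows "d * x powr (d - 1) \<le> x powr d - (x - 1) powr d"
proof (cases "x = 1")
  case True thus ?thesis using d by simp
next
  case False
  hence x1: "x - 1 > 0" using x by simp
  obtain \<xi> where xi: "x - 1 < \<xi>" "\<xi> < x" "x powr d - (x - 1) powr d = (x - (x - 1)) * (d * \<xi> powr (d - 1))"
    using mvt_powr[OF x1, of x d] by auto
  have "x powr (d - 1) \<le> \<xi> powr (d - 1)" using xi x1 d by (intro powr_mono2') auto
  thus ?thesis using xi d by simp
qed

lemma sum_powr_le:
  fixes d :: real
  assumes d: "0 < d" "d \<le> 1"
  shows "(\<Sum>k=1..p. real k powr (d - 1)) \<le> real p powr d / d"
proof (induction p)
  case 0 then show ?case by simp
next
  case (Suc p)
  have "(\<Sum>k=1..Suc p. real k powr (d - 1)) = (\<Sum>k=1..p. real k powr (d - 1)) + real (Suc p) powr (d - 1)"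
    by simp
  also have "\<dots> \<le> real p powr d / d + (real (Suc p) powr d - real p powr d) / d"
    using Suc concave_step[OF d, of "real (Suc p)"] d by (simp add: field_simps)
  also have "\<dots> = real (Suc p) powr d / d" using d by (simp add: field_simps)
  finally show ?case .
qed

lemma tail_step:
  fixes t d :: real
  assumes d: "0 < d" and t: "t \<ge> 1"
  shows "t powr (- d - 1) \<le> 2 powr (d + 1) / d * (t powr (- d) - (t + 1) powr (- d))"
proof -
  obtain \<xi> where xi: "t < \<xi>" "\<xi> < t + 1" "(t + 1) powr (-d) - t powr (-d) = (t + 1 - t) * (-d * \<xi> powr (-d - 1))"
    using mvt_powr[of t "t+1" "-d"] t by auto
  have "(t + 1) powr (-d - 1) \<le> \<xi> powr (-d - 1)" using xi t d by (intro powr_mono2') auto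
  moreover have "t powr (- d - 1) \<le> 2 powr (d + 1) * (t + 1) powr (-d - 1)"
  proof -
    have "(2 * t) powr (-d - 1) \<le> (t + 1) powr (-d - 1)" using t d by (intro powr_mono2') auto
    hence "2 powr (-d - 1) * t powr (- d - 1) \<le> (t + 1) powr (-d - 1)" by (simp add: powr_mult)
    hence "2 powr (d + 1) * (2 powr (-d - 1) * t powr (- d - 1)) \<le> 2 powr (d + 1) * (t + 1) powr (-d - 1)"
      by (intro mult_left_mono) auto
    moreover have "2 powr (d + 1) * 2 powr (-d - 1) = (1::real)" by (simp flip: powr_add)
    ultimately show ?thesis by (simp add: mult.assoc[symmetric])
  qed
  ultimately have "t powr (- d - 1) \<le> 2 powr (d + 1) * \<xi> powr (-d - 1)"
    by (meson mult_left_mono order_trans powr_ge_zero)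
  also have "\<dots> = 2 powr (d + 1) / d * (t powr (- d) - (t + 1) powr (- d))"
  proof -
    have "t powr (- d) - (t + 1) powr (- d) = d * \<xi> powr (-d - 1)" using xi(3) by simp
    thus ?thesis using d by simp
  qed
  finally show ?thesis .
qed

lemma tpow:
  fixes N t b :: real
  assumes N: "N > 0" and t: "N \<le> t" "t \<le> 2 * N" and b: "b \<ge> 0"
  shows "N powr (b - 1) / 2 \<le> t powr (b - 1)"
proof (cases "b \<ge> 1")
  case True
  have "N powr (b - 1) \<le> t powr (b - 1)" using True N t by (intro powr_mono2) auto
  thus ?thesis using powr_ge_zero[of N "b - 1"] by linarith
next
  case False
  have A: "(2 * N) powr (b - 1) \<le> t powr (b - 1)" using False N t by (intro powr_mono2') auto
  have "2 powr (b - 1) \<ge> 2 powr (-1::real)" using b by (intro powr_mono) auto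
  moreover have "2 powr (-1::real) = 1/2" by (simp add: powr_minus)
  ultimately have h: "1/2 \<le> 2 powr (b - 1)" by simp
  have "N powr (b - 1) / 2 = 1/2 * N powr (b - 1)" by simp
  also have "\<dots> \<le> 2 powr (b - 1) * N powr (b - 1)" using h by (intro mult_right_mono) auto
  also have "\<dots> = (2 * N) powr (b - 1)" by (simp add: powr_mult)
  finally show ?thesis using A by linarith
qed



context sig begin

lemma P10_A:
  assumes C: "C > 0" and P10: "\<forall>p::nat. 1 \<le> p \<longrightarrow>
              (\<Sum>k=1..p. \<sigma> (real k) / real k powr (1 + \<beta>)) \<le> C * \<sigma> (real p) / real p powr \<beta>"
  shows Acond
proof -
  define f where "f = (\<lambda>k::nat. \<sigma> (real k) / real k powr (1 + \<beta>))"
  define g where "g = 1 / 2 powr (\<beta> + 1)"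
  have g: "g > 0" unfolding g_def by simp
  obtain n where n: "2 powr \<beta> < (1 + g/C)^n * (g/C)" using geo_big[OF C g] by blast
  define \<rho> where "\<rho> = (1 + g/C)^n * (g/C)"
  define L :: real where "L = 2^(Suc n)"
  have L: "L \<ge> 1" unfolding L_def using one_le_power[of "2::real" "Suc n"] by simp
  have main: "\<rho> * L powr \<beta> * \<sigma> (real p) \<le> \<sigma> (L * real p)" if p: "p \<ge> 1" for p :: nat
  proof -
    define A where "A m = sum f {1..2^m * p}" for m
    define U where "U m = \<sigma> (real (2^m * p)) / real (2^m * p) powr \<beta>" for m
    have Nge: "2^m * p \<ge> 1" for m :: nat using p by simp
    have AU: "A m \<le> C * U m" for m
    proof -
      have "sum f {1..2^m * p} \<le> C * \<sigma> (real (2^m * p)) / real (2^m * p) powr \<beta>"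
        using P10 Nge[of m] unfolding f_def by blast
      thus ?thesis unfolding A_def U_def by simp
    qed
    have step: "A (Suc m) \<ge> A m + g * U m" for m
    proof -
      define N where "N = 2^m * p"
      have N: "N \<ge> 1" unfolding N_def using Nge .
      have N2: "2^Suc m * p = N + N" unfolding N_def by simp
      have "A (Suc m) = sum f {1..N} + sum f {N+1..N+N}"
        unfolding A_def N2 using N by (intro sum.ub_add_nat) auto
      moreover have "sum f {1..N} = A m" unfolding A_def N_def ..
      moreover have "sum f {N+1..N+N} \<ge> g * U m"
      proof -
        have "real (card {N+1..N+N}) * (\<sigma> (real N) / (2 * real N) powr (1 + \<beta>)) \<le> sum f {N+1..N+N}"
        proof (rule sum_bounded_below)
          fix k assume k: "k \<in> {N+1..N+N}"
          show "\<sigma> (real N) / (2 * real N) powr (1 + \<beta>) \<le> f k" unfolding f_def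
            using k N snn[of "real N"] sle[of "real N" "real k"] beta
            by (intro frac_le powr_mono2) auto
        qed
        moreover have "real (card {N+1..N+N}) * (\<sigma> (real N) / (2 * real N) powr (1 + \<beta>)) = g * U m"
        proof -
          have "card {N+1..N+N} = N" by simp
          moreover have "(2 * real N) powr (1 + \<beta>) = 2 powr (\<beta> + 1) * (real N powr \<beta> * real N)"
            using N by (simp add: powr_mult powr_add mult_ac)
          ultimately show ?thesis unfolding g_def U_def N_def[symmetric] using N by (simp add: field_simps)
        qed
        ultimately show ?thesis by simp
      qed
      ultimately show ?thesis by simp
    qed
    have A0: "A 0 \<ge> 0" unfolding A_def f_def by (intro sum_nonneg divide_nonneg_nonneg snn) auto
    have "U (Suc n) \<ge> \<rho> * U 0" using seq_inc[OF C g AU step A0, of n] unfolding \<rho>_def by simp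
    hence "\<sigma> (L * real p) / (L * real p) powr \<beta> \<ge> \<rho> * (\<sigma> (real p) / real p powr \<beta>)"
      unfolding U_def L_def by simp
    hence "\<sigma> (L * real p) / (L powr \<beta> * real p powr \<beta>) \<ge> \<rho> * (\<sigma> (real p) / real p powr \<beta>)"
      using L p by (simp add: powr_mult)
    thus ?thesis using L p by (simp add: field_simps)
  qed
  show ?thesis using NA_A[of L \<rho> 1] main L n unfolding \<rho>_def by auto
qed

end


context sig begin
lemma B_P10:
  assumes Bcond
  shows "\<exists>C>0. \<forall>p::nat. 1 \<le> p \<longrightarrow>
              (\<Sum>k=1..p. \<sigma> (real k) / real k powr (1 + \<beta>)) \<le> C * \<sigma> (real p) / real p powr \<beta>"
proof -
  obtain \<gamma> where g: "\<beta> < \<gamma>" "\<gamma> \<le> \<beta> + 1" "almost_increasing_on {1..} (\<lambda>t. \<sigma> t / t powr \<gamma>)"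
    using B_small[OF assms] by force
  obtain M where M: "M > 0" "\<And>x y. x \<in> {1..} \<Longrightarrow> y \<in> {1..} \<Longrightarrow> x \<le> y \<Longrightarrow> \<sigma> x / x powr \<gamma> \<le> M * (\<sigma> y / y powr \<gamma>)"
    using g(3) unfolding almost_increasing_on_def by blast
  define \<delta> where "\<delta> = \<gamma> - \<beta>"
  have d: "\<delta> > 0" "\<delta> \<le> 1" unfolding \<delta>_def using g by auto
  have "(\<Sum>k=1..p. \<sigma> (real k) / real k powr (1 + \<beta>)) \<le> M / \<delta> * \<sigma> (real p) / real p powr \<beta>"
    if p: "1 \<le> p" for p :: nat
  proof -
    define c where "c = M * (\<sigma> (real p) / real p powr \<gamma>)"
    have c0: "c \<ge> 0" unfolding c_def using M snn[of "real p"] by auto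
    have "(\<Sum>k=1..p. \<sigma> (real k) / real k powr (1 + \<beta>)) \<le> (\<Sum>k=1..p. c * real k powr (\<delta> - 1))"
    proof (rule sum_mono)
      fix k assume k: "k \<in> {1..p}"
      have "\<sigma> (real k) / real k powr (1 + \<beta>) = (\<sigma> (real k) / real k powr \<gamma>) * real k powr (\<delta> - 1)"
        using k unfolding \<delta>_def by (simp add: powr_diff powr_add field_simps)
      also have "\<dots> \<le> c * real k powr (\<delta> - 1)" unfolding c_def
        using M(2)[of "real k" "real p"] k by (intro mult_right_mono) auto
      finally show "\<sigma> (real k) / real k powr (1 + \<beta>) \<le> c * real k powr (\<delta> - 1)" .
    qed
    also have "\<dots> = c * (\<Sum>k=1..p. real k powr (\<delta> - 1))" by (simp add: sum_distrib_left)
    also have "\<dots> \<le> c * (real p powr \<delta> / \<delta>)" using c0 sum_powr_le[OF d] by (intro mult_left_mono) auto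
    also have "\<dots> = M / \<delta> * \<sigma> (real p) / real p powr \<beta>"
    proof -
      have "real p powr \<gamma> = real p powr \<delta> * real p powr \<beta>" unfolding \<delta>_def by (simp flip: powr_add)
      thus ?thesis unfolding c_def using p d by (simp add: field_simps)
    qed
    finally show ?thesis .
  qed
  thus ?thesis using M d by (intro exI[of _ "M/\<delta>"]) auto
qed

end


context sig begin

lemma P7_A:
  assumes C: "C > 0" and P7: "\<forall>p::nat. 1 \<le> p \<and> a \<le> real p \<longrightarrow>
              summable (\<lambda>j. real (j + p) powr (\<beta> - 1) / \<sigma> (real (j + p))) \<and>
              (\<Sum>j. real (j + p) powr (\<beta> - 1) / \<sigma> (real (j + p)))
                 \<le> C * real p powr \<beta> / \<sigma> (real p)"
  shows Acond
proof -
  define f where "f = (\<lambda>k::nat. real k powr (\<beta> - 1) / \<sigma> (real k))"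
  define g where "g = 1 / 2 powr (\<beta> + 1)"
  have g: "g > 0" unfolding g_def by simp
  obtain n where n: "2 powr \<beta> < (1 + g/C)^n * (g/C)" using geo_big[OF C g] by blast
  define \<rho> where "\<rho> = (1 + g/C)^n * (g/C)"
  define L :: real where "L = 2^(Suc n)"
  have L: "L \<ge> 1" unfolding L_def using one_le_power[of "2::real" "Suc n"] by simp
  define P0 where "P0 = max 1 a"
  have main: "\<rho> * L powr \<beta> * \<sigma> (real p) \<le> \<sigma> (L * real p)" if p: "real p \<ge> P0" for p :: nat
  proof -
    have p1: "1 \<le> p" "a \<le> real p" using p unfolding P0_def by auto
    define Nn where "Nn m = 2^m * p" for m
    have Nge: "1 \<le> Nn m" "a \<le> real (Nn m)" for m
    proof -
      have "p \<le> Nn m" unfolding Nn_def by simp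
      thus "1 \<le> Nn m" "a \<le> real (Nn m)" using p1 by auto
    qed
    define B where "B m = (\<Sum>j. f (j + Nn m))" for m
    define V where "V m = real (Nn m) powr \<beta> / \<sigma> (real (Nn m))" for m
    have summ: "summable (\<lambda>j. f (j + Nn m))" for m using P7 Nge[of m] unfolding f_def by auto
    have BV: "B m \<le> C * V m" for m
      using P7 Nge[of m] unfolding B_def V_def f_def by (simp add: mult_ac)
    have fnn: "f k \<ge> 0" for k unfolding f_def by (intro divide_nonneg_nonneg snn) auto
    have Bnn: "B m \<ge> 0" for m unfolding B_def using summ fnn by (intro suminf_nonneg) auto
    have step: "B m \<ge> B (Suc m) + g * V (Suc m)" for m
    proof -
      define N where "N = Nn m"
      have N: "N \<ge> 1" "a \<le> real N" unfolding N_def using Nge by auto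
      have N2: "Nn (Suc m) = N + N" unfolding N_def Nn_def by simp
      have "B m = (\<Sum>j. f (j + N + N)) + (\<Sum>j<N. f (j + N))"
        unfolding B_def N_def[symmetric] using suminf_split_initial_segment[OF summ[of m, unfolded N_def[symmetric]], of N]
        by (simp add: add.assoc)
      also have "(\<Sum>j. f (j + N + N)) = B (Suc m)" unfolding B_def N2 by (simp add: add.assoc)
      finally have Bm: "B m = B (Suc m) + (\<Sum>j<N. f (j + N))" .
      have "real (card {..<N}) * (real N powr (\<beta> - 1) / 2 / \<sigma> (2 * real N)) \<le> (\<Sum>j<N. f (j + N))"
      proof (rule sum_bounded_below)
        fix j assume j: "j \<in> {..<N}"
        have st: "0 < \<sigma> (real (j + N))" using spos[of "real (j+N)"] N by auto
        show "real N powr (\<beta> - 1) / 2 / \<sigma> (2 * real N) \<le> f (j + N)" unfolding f_def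
          using j N st sle[of "real (j + N)" "2 * real N"] tpow[of "real N" "real (j + N)" \<beta>] beta
          by (intro frac_le) auto
      qed
      moreover have "real (card {..<N}) * (real N powr (\<beta> - 1) / 2 / \<sigma> (2 * real N)) = g * V (Suc m)"
      proof -
        have "real N * real N powr (\<beta> - 1) = real N powr \<beta>" using N by (simp add: powr_diff)
        moreover have "real (Nn (Suc m)) = 2 * real N" unfolding N2 by simp
        moreover have "(2 * real N) powr \<beta> = 2 powr \<beta> * real N powr \<beta>" by (simp add: powr_mult)
        moreover have "2 powr (\<beta> + 1) = 2 powr \<beta> * 2" by (simp add: powr_add)
        ultimately show ?thesis unfolding g_def V_def using N by (simp add: field_simps)
      qed
      ultimately show ?thesis using Bm by simp
    qed
    have "\<rho> * V (Suc n) \<le> V 0" using seq_dec[of C g B V, OF C g BV step Bnn, of n] unfolding \<rho>_def by simp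
    moreover have "real (Nn (Suc n)) = L * real p" unfolding Nn_def L_def by simp
    moreover have "real (Nn 0) = real p" unfolding Nn_def by simp
    ultimately have "\<rho> * ((L * real p) powr \<beta> / \<sigma> (L * real p)) \<le> real p powr \<beta> / \<sigma> (real p)"
      unfolding V_def by simp
    moreover have "\<sigma> (L * real p) > 0" "\<sigma> (real p) > 0"
      using spos[of "L * real p"] spos[of "real p"] p1 L
      by (auto intro: order_trans[OF _ mult_right_mono[of 1 L "real p", simplified]])
    moreover have "real p > 0" using p1 by simp
    ultimately show ?thesis using L by (simp add: field_simps powr_mult)
  qed
  show ?thesis using NA_A[of L \<rho> P0] main L n unfolding \<rho>_def P0_def by auto
qed

lemma B_P7:
  assumes Bcond
  shows "\<exists>C>0. \<forall>p::nat. 1 \<le> p \<and> a \<le> real p \<longrightarrow>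
              summable (\<lambda>j. real (j + p) powr (\<beta> - 1) / \<sigma> (real (j + p))) \<and>
              (\<Sum>j. real (j + p) powr (\<beta> - 1) / \<sigma> (real (j + p)))
                 \<le> C * real p powr \<beta> / \<sigma> (real p)"
proof -
  obtain \<gamma> where g: "\<gamma> > \<beta>" "almost_increasing_on {1..} (\<lambda>t. \<sigma> t / t powr \<gamma>)"
    using assms unfolding Bcond_def by force
  obtain M where M: "M > 0" "\<And>x y. x \<in> {1..} \<Longrightarrow> y \<in> {1..} \<Longrightarrow> x \<le> y \<Longrightarrow> \<sigma> x / x powr \<gamma> \<le> M * (\<sigma> y / y powr \<gamma>)"
    using g(2) unfolding almost_increasing_on_def by blast
  define \<delta> where "\<delta> = \<gamma> - \<beta>"
  have d: "\<delta> > 0" unfolding \<delta>_def using g by auto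
  define K where "K = 2 powr (\<delta> + 1) / \<delta>"
  have K: "K > 0" unfolding K_def using d by auto
  have "summable (\<lambda>j. real (j + p) powr (\<beta> - 1) / \<sigma> (real (j + p))) \<and>
        (\<Sum>j. real (j + p) powr (\<beta> - 1) / \<sigma> (real (j + p))) \<le> M * K * real p powr \<beta> / \<sigma> (real p)"
    if p: "1 \<le> p" "a \<le> real p" for p :: nat
  proof -
    have sp: "\<sigma> (real p) > 0" using spos p by auto
    define c where "c = M * real p powr \<gamma> / \<sigma> (real p)"
    have c0: "c \<ge> 0" unfolding c_def using M sp by auto
    define G where "G j = real (j + p) powr (- \<delta>)" for j
    have Glim: "G \<longlonglongrightarrow> 0" unfolding G_def
    proof (rule tendsto_neg_powr)
      show "- \<delta> < 0" using d by simp
      show "filterlim (\<lambda>j. real (j + p)) at_top sequentially"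
        by (intro filterlim_real_sequentially[THEN filterlim_compose] filterlim_add_const_nat_at_top)
    qed
    have tel: "(\<lambda>j. c * K * (G j - G (Suc j))) sums (c * K * (G 0 - 0))"
      by (intro sums_mult telescope_sums' Glim)
    have bound: "real (j + p) powr (\<beta> - 1) / \<sigma> (real (j + p)) \<le> c * K * (G j - G (Suc j))" for j
    proof -
      define t where "t = real (j + p)"
      have t: "t \<ge> 1" "real p \<le> t" unfolding t_def using p by auto
      have st: "\<sigma> t > 0" using spos[of t] t p by auto
      have "\<sigma> (real p) / real p powr \<gamma> \<le> M * (\<sigma> t / t powr \<gamma>)" using M(2)[of "real p" t] t p by auto
      hence "1 / \<sigma> t \<le> M * real p powr \<gamma> / \<sigma> (real p) * t powr (- \<gamma>)"
        using sp st t p by (simp add: field_simps powr_minus)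
      hence "t powr (\<beta> - 1) / \<sigma> t \<le> t powr (\<beta> - 1) * (c * t powr (- \<gamma>))"
        unfolding c_def by (simp add: divide_inverse mult_left_mono)
      also have "\<dots> = c * t powr (- \<delta> - 1)"
      proof -
        have e: "\<beta> - 1 - \<gamma> = - \<delta> - 1" unfolding \<delta>_def by simp
        show ?thesis by (simp add: mult_ac e flip: powr_add)
      qed
      also have "\<dots> \<le> c * (K * (t powr (- \<delta>) - (t + 1) powr (- \<delta>)))"
        unfolding K_def using tail_step[OF d t(1)] c0 by (intro mult_left_mono) auto
      also have "\<dots> = c * K * (G j - G (Suc j))" unfolding G_def t_def by (simp add: mult_ac add_ac)
      finally show ?thesis unfolding t_def .
    qed
    have nn: "0 \<le> real (j + p) powr (\<beta> - 1) / \<sigma> (real (j + p))" for j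
      by (intro divide_nonneg_nonneg snn) auto
    have sg: "summable (\<lambda>j. c * K * (G j - G (Suc j)))" using tel by (rule sums_summable)
    have summ: "summable (\<lambda>j. real (j + p) powr (\<beta> - 1) / \<sigma> (real (j + p)))"
    proof (rule summable_comparison_test'[OF sg])
      fix j :: nat
      have e: "norm (real (j + p) powr (\<beta> - 1) / \<sigma> (real (j + p))) = real (j + p) powr (\<beta> - 1) / \<sigma> (real (j + p))"
        using nn[of j] by (simp only: real_norm_def abs_of_nonneg)
      show "norm (real (j + p) powr (\<beta> - 1) / \<sigma> (real (j + p))) \<le> c * K * (G j - G (Suc j))"
        unfolding e by (rule bound)
    qed
    have "(\<Sum>j. real (j + p) powr (\<beta> - 1) / \<sigma> (real (j + p))) \<le> (\<Sum>j. c * K * (G j - G (Suc j)))"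
      using summ sg bound by (intro suminf_le) auto
    also have "\<dots> = c * K * G 0" using tel by (simp add: sums_iff)
    also have "\<dots> = M * K * real p powr \<beta> / \<sigma> (real p)"
    proof -
      have "real p powr \<gamma> * real p powr (- \<delta>) = real p powr \<beta>" unfolding \<delta>_def by (simp flip: powr_add)
      thus ?thesis unfolding c_def G_def by (simp add: field_simps)
    qed
    finally show ?thesis using summ by simp
  qed
  thus ?thesis using M K by (intro exI[of _ "M * K"]) auto
qed

end


context sig begin

lemma P6e_A:
  assumes e: "e > 0" and epos: "\<forall>x\<ge>e. \<sigma> x > 0"
    and C: "C > 0"
    and P6: "\<forall>y\<ge>e. (\<lambda>t. t powr (\<beta> - 1) / \<sigma> t) integrable_on {y..} \<and>
                  integral {y..} (\<lambda>t. t powr (\<beta> - 1) / \<sigma> t) / y powr \<beta> \<le> C / \<sigma> y"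
  shows Acond
proof -
  define f where "f = (\<lambda>t. t powr (\<beta> - 1) / \<sigma> t)"
  define g where "g = 1 / 2 powr (\<beta> + 1)"
  have g: "g > 0" unfolding g_def by simp
  obtain n where n: "1 < (1 + g/C)^n * (g/C)" using geo_big[OF C g] by blast
  define \<rho> where "\<rho> = (1 + g/C)^n * (g/C)"
  define K :: real where "K = 2^(Suc n)"
  have K: "K > 1" unfolding K_def using one_less_power[of "2::real" "Suc n"] by simp
  have main: "\<rho> * K powr \<beta> * \<sigma> y \<le> \<sigma> (K * y)" if y: "y \<ge> e" for y
  proof -
    define Nn where "Nn m = (2::real)^m * y" for m
    have Nge: "e \<le> Nn m" for m
    proof -
      have "y \<le> Nn m" unfolding Nn_def using y e by (simp add: mult_le_cancel_right1)
      thus ?thesis using y by linarith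
    qed
    define B where "B m = integral {Nn m..} f" for m
    define V where "V m = Nn m powr \<beta> / \<sigma> (Nn m)" for m
    have sN: "\<sigma> (Nn m) > 0" for m using epos Nge[of m] by auto
    have NP: "Nn m > 0" for m using Nge[of m] e by linarith
    have intN: "f integrable_on {Nn m..}" for m using P6 Nge[of m] unfolding f_def by auto
    have BV: "B m \<le> C * V m" for m
    proof -
      have "B m / Nn m powr \<beta> \<le> C / \<sigma> (Nn m)" using P6 Nge[of m] unfolding B_def f_def by auto
      thus ?thesis unfolding V_def using NP[of m] sN[of m] by (simp add: field_simps)
    qed
    have fnn: "f t \<ge> 0" if "t \<ge> 0" for t unfolding f_def using that by (intro divide_nonneg_nonneg snn) auto
    have Bnn: "B m \<ge> 0" for m unfolding B_def
      using intN NP[of m] fnn by (intro integral_nonneg) auto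
    have step: "B m \<ge> B (Suc m) + g * V (Suc m)" for m
    proof -
      define N where "N = Nn m"
      have N: "N > 0" "e \<le> N" "\<sigma> N > 0" unfolding N_def using NP Nge sN by auto
      have N2: "Nn (Suc m) = 2 * N" unfolding N_def Nn_def by simp
      have i1: "f integrable_on {N..2*N}" unfolding f_def using N by (intro int2) auto
      have i2: "f integrable_on {2*N..}" using intN[of "Suc m"] unfolding N2 .
      have "(f has_integral (integral {N..2*N} f + integral {2*N..} f)) ({N..2*N} \<union> {2*N..})"
        by (intro has_integral_Un integrable_integral i1 i2) (auto intro: negligible_subset[OF negligible_sing[of "2*N"]])
      moreover have "{N..2*N} \<union> {2*N..} = {N..}" using N by auto
      ultimately have "B m = integral {N..2*N} f + B (Suc m)"
        unfolding B_def N2 N_def[symmetric] by (simp add: integral_unique)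
      moreover have "integral {N..2*N} f \<ge> g * V (Suc m)"
      proof -
        have "integral {N..2*N} (\<lambda>_. N powr (\<beta> - 1) / 2 / \<sigma> (2 * N)) \<le> integral {N..2*N} f"
        proof (rule integral_le[OF _ i1])
          fix t assume t: "t \<in> {N..2*N}"
          have st: "0 < \<sigma> t" using epos t N by auto
          show "N powr (\<beta> - 1) / 2 / \<sigma> (2 * N) \<le> f t" unfolding f_def
            using t N st sle[of t "2 * N"] tpow[of N t \<beta>] beta
            by (intro frac_le) auto
        qed auto
        moreover have "integral {N..2*N} (\<lambda>_. N powr (\<beta> - 1) / 2 / \<sigma> (2 * N)) = g * V (Suc m)"
        proof -
          have "N * N powr (\<beta> - 1) = N powr \<beta>" using N by (simp add: powr_diff)
          moreover have "(2 * N) powr \<beta> = 2 powr \<beta> * N powr \<beta>" by (simp add: powr_mult)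
          moreover have "2 powr (\<beta> + 1) = 2 powr \<beta> * 2" by (simp add: powr_add)
          ultimately show ?thesis unfolding g_def V_def N2 using N by (simp add: field_simps)
        qed
        ultimately show ?thesis by simp
      qed
      ultimately show ?thesis by simp
    qed
    have "\<rho> * V (Suc n) \<le> V 0" using seq_dec[of C g B V, OF C g BV step Bnn, of n] unfolding \<rho>_def by simp
    moreover have "Nn (Suc n) = K * y" unfolding Nn_def K_def by simp
    moreover have "Nn 0 = y" unfolding Nn_def by simp
    ultimately have "\<rho> * ((K * y) powr \<beta> / \<sigma> (K * y)) \<le> y powr \<beta> / \<sigma> y"
      unfolding V_def by simp
    moreover have "\<sigma> (K * y) > 0" "\<sigma> y > 0" "y > 0" using sN[of "Suc n"] sN[of 0] NP[of 0]
      unfolding \<open>Nn (Suc n) = K * y\<close> \<open>Nn 0 = y\<close> by auto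
    ultimately show ?thesis using K by (simp add: field_simps powr_mult)
  qed
  show ?thesis unfolding Acond_def using main K n e unfolding \<rho>_def
    by (intro exI[of _ K] exI[of _ \<rho>] exI[of _ e]) (auto simp: \<rho>_def)
qed

lemma B_P6e:
  assumes B: Bcond and e: "e > 0" and epos: "\<forall>x\<ge>e. \<sigma> x > 0"
  shows "\<exists>C>0. \<forall>y\<ge>e. (\<lambda>t. t powr (\<beta> - 1) / \<sigma> t) integrable_on {y..} \<and>
                  integral {y..} (\<lambda>t. t powr (\<beta> - 1) / \<sigma> t) / y powr \<beta> \<le> C / \<sigma> y"
proof -
  obtain \<gamma> where g: "\<gamma> > \<beta>" "almost_increasing_on {e..} (\<lambda>t. \<sigma> t / t powr \<gamma>)"
    using B e unfolding Bcond_def by force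
  obtain M where M: "M > 0" "\<And>x y. x \<in> {e..} \<Longrightarrow> y \<in> {e..} \<Longrightarrow> x \<le> y \<Longrightarrow> \<sigma> x / x powr \<gamma> \<le> M * (\<sigma> y / y powr \<gamma>)"
    using g(2) unfolding almost_increasing_on_def by blast
  define \<delta> where "\<delta> = \<gamma> - \<beta>"
  have d: "\<delta> > 0" unfolding \<delta>_def using g by auto
  have "(\<lambda>t. t powr (\<beta> - 1) / \<sigma> t) integrable_on {y..} \<and>
        integral {y..} (\<lambda>t. t powr (\<beta> - 1) / \<sigma> t) / y powr \<beta> \<le> (M / \<delta>) / \<sigma> y" if y: "y \<ge> e" for y
  proof -
    have yp: "y > 0" using y e by auto
    have sy: "\<sigma> y > 0" using epos y by auto
    define c where "c = M * y powr \<gamma> / \<sigma> y"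
    have c0: "c \<ge> 0" unfolding c_def using M sy by auto
    have I: "((\<lambda>t. c * t powr (- \<delta> - 1)) has_integral (c * (y powr (- \<delta>) / \<delta>))) {y..}"
    proof -
      have "((\<lambda>t. t powr (- \<delta> - 1)) has_integral (- (y powr (- \<delta> - 1 + 1)) / (- \<delta> - 1 + 1))) {y..}"
        using d yp by (intro has_integral_powr_to_inf) auto
      hence "((\<lambda>t. t powr (- \<delta> - 1)) has_integral (y powr (- \<delta>) / \<delta>)) {y..}" by simp
      thus ?thesis by (rule has_integral_mult_right)
    qed
    have bound: "t powr (\<beta> - 1) / \<sigma> t \<le> c * t powr (- \<delta> - 1)" if t: "t \<in> {y..}" for t
    proof -
      have tp: "t > 0" "y \<le> t" using t yp by auto
      have st: "\<sigma> t > 0" using epos t y by auto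
      have "\<sigma> y / y powr \<gamma> \<le> M * (\<sigma> t / t powr \<gamma>)" using M(2)[of y t] t y by auto
      hence "1 / \<sigma> t \<le> c * t powr (- \<gamma>)"
        unfolding c_def using sy st tp yp by (simp add: field_simps powr_minus)
      hence "t powr (\<beta> - 1) / \<sigma> t \<le> t powr (\<beta> - 1) * (c * t powr (- \<gamma>))"
        by (simp add: divide_inverse mult_left_mono)
      also have "\<dots> = c * t powr (- \<delta> - 1)"
      proof -
        have e: "\<beta> - 1 - \<gamma> = - \<delta> - 1" unfolding \<delta>_def by simp
        show ?thesis by (simp add: mult_ac e flip: powr_add)
      qed
      finally show ?thesis .
    qed
    have integ: "(\<lambda>t. t powr (\<beta> - 1) / \<sigma> t) integrable_on {y..}"
    proof -
      have "(\<lambda>t. t powr (\<beta> - 1) / \<sigma> (max 0 t)) integrable_on {y..}"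
      proof (rule measurable_bounded_by_integrable_imp_integrable_real[OF meas_leb2])
        show "(\<lambda>t. c * t powr (- \<delta> - 1)) integrable_on {y..}" using I by blast
        fix t assume t: "t \<in> {y..}"
        have "0 \<le> t powr (\<beta> - 1) / \<sigma> t" using t yp snn[of t] by auto
        thus "\<bar>t powr (\<beta> - 1) / \<sigma> (max 0 t)\<bar> \<le> c * t powr (- \<delta> - 1)" using bound[OF t] t yp by auto
      qed auto
      thus ?thesis by (rule integrable_eq) (use yp in auto)
    qed
    have "integral {y..} (\<lambda>t. t powr (\<beta> - 1) / \<sigma> t) \<le> integral {y..} (\<lambda>t. c * t powr (- \<delta> - 1))"
      using integ I bound by (intro integral_le) auto
    also have "\<dots> = c * (y powr (- \<delta>) / \<delta>)" using I by (rule integral_unique)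
    finally have "integral {y..} (\<lambda>t. t powr (\<beta> - 1) / \<sigma> t) / y powr \<beta> \<le> c * (y powr (- \<delta>) / \<delta>) / y powr \<beta>"
      using yp by (intro divide_right_mono) auto
    also have "\<dots> = (M / \<delta>) / \<sigma> y"
    proof -
      have "y powr \<gamma> * y powr (- \<delta>) = y powr \<beta>" unfolding \<delta>_def by (simp flip: powr_add)
      thus ?thesis unfolding c_def using yp sy d by (simp add: field_simps)
    qed
    finally show ?thesis using integ by simp
  qed
  thus ?thesis using M d by (intro exI[of _ "M/\<delta>"]) auto
qed

end


theorem theorem2p16:
  fixes \<sigma> :: "real \<Rightarrow> real" and \<beta> a :: real
  assumes mono: "mono_on {0..} \<sigma>"
    and nonneg: "\<forall>x\<ge>0. \<sigma> x \<ge> 0"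
    and lim: "filterlim \<sigma> at_top at_top"
    and beta: "\<beta> \<ge> 0"
    and a: "a \<ge> 0"
    and pos: "\<forall>x\<ge>a. \<sigma> x > 0"
    and zero: "\<forall>x. 0 \<le> x \<and> x \<le> of_int (ceiling a) - 1 \<longrightarrow> \<sigma> x = 0"
  defines "P1 \<equiv> (\<exists>C>0. \<forall>y\<ge>1.
              integral {1..y} (\<lambda>t. \<sigma> t / t powr (\<beta> + 1)) \<le> C * \<sigma> y / y powr \<beta>)"
    and "P2 \<equiv> ((\<lambda>k. Liminf at_top (\<lambda>t. ereal (\<sigma> (k * t) / (k powr \<beta> * \<sigma> t))))
                \<longlongrightarrow> \<infinity>) at_top"
    and "P3 \<equiv> (\<exists>K>1. Liminf at_top (\<lambda>t. ereal (\<sigma> (K * t) / \<sigma> t)) > ereal (K powr \<beta>))"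
    and "P4 \<equiv> lower_matuszewska \<sigma> > ereal \<beta>"
    and "P5 \<equiv> (\<exists>\<gamma>>\<beta>. if a > 0 then almost_increasing_on {a..} (\<lambda>t. \<sigma> t / t powr \<gamma>)
                  else (\<forall>\<epsilon>>0. almost_increasing_on {\<epsilon>..} (\<lambda>t. \<sigma> t / t powr \<gamma>)))"
    and "P6 \<equiv> (if a > 0 then
               (\<exists>C>0. \<forall>y\<ge>a. (\<lambda>t. t powr (\<beta> - 1) / \<sigma> t) integrable_on {y..} \<and>
                  integral {y..} (\<lambda>t. t powr (\<beta> - 1) / \<sigma> t) / y powr \<beta> \<le> C / \<sigma> y)
             else (\<forall>\<epsilon>>0. \<exists>C>0. \<forall>y\<ge>\<epsilon>. (\<lambda>t. t powr (\<beta> - 1) / \<sigma> t) integrable_on {y..} \<and>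
                  integral {y..} (\<lambda>t. t powr (\<beta> - 1) / \<sigma> t) / y powr \<beta> \<le> C / \<sigma> y))"
    and "P7 \<equiv> (\<exists>C>0. \<forall>p::nat. 1 \<le> p \<and> a \<le> real p \<longrightarrow>
              summable (\<lambda>j. real (j + p) powr (\<beta> - 1) / \<sigma> (real (j + p))) \<and>
              (\<Sum>j. real (j + p) powr (\<beta> - 1) / \<sigma> (real (j + p)))
                 \<le> C * real p powr \<beta> / \<sigma> (real p))"
    and "P8 \<equiv> (\<forall>\<theta>. 0 < \<theta> \<and> \<theta> < 1 \<longrightarrow> (\<exists>k::nat. 2 \<le> k \<and>
              (\<forall>p::nat. 1 \<le> p \<longrightarrow>
                 \<sigma> (real p) \<le> \<theta> * real k powr (- \<beta>) * \<sigma> (real k * real p))))"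
    and "P9 \<equiv> (\<exists>k::nat. 2 \<le> k \<and>
              Liminf sequentially (\<lambda>p::nat. ereal (\<sigma> (real k * real p) / \<sigma> (real p)))
                > ereal (real k powr \<beta>))"
    and "P10 \<equiv> (\<exists>C>0. \<forall>p::nat. 1 \<le> p \<longrightarrow>
              (\<Sum>k=1..p. \<sigma> (real k) / real k powr (1 + \<beta>)) \<le> C * \<sigma> (real p) / real p powr \<beta>)"
  shows "(P1 \<longleftrightarrow> P2) \<and> (P1 \<longleftrightarrow> P3) \<and> (P1 \<longleftrightarrow> P4) \<and> (P1 \<longleftrightarrow> P5) \<and> (P1 \<longleftrightarrow> P6) \<and>
         (P1 \<longleftrightarrow> P7) \<and> (P1 \<longleftrightarrow> P8) \<and> (P1 \<longleftrightarrow> P9) \<and> (P1 \<longleftrightarrow> P10)"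
proof -
  interpret sig \<sigma> \<beta> a using mono nonneg beta a pos by unfold_locales
  have h1: "P1 \<longleftrightarrow> Bcond"
  proof
    assume P1 then obtain C where "C > 0" "\<forall>y\<ge>1. integral {1..y} (\<lambda>t. \<sigma> t / t powr (\<beta> + 1)) \<le> C * \<sigma> y / y powr \<beta>"
      unfolding P1_def by blast
    then show Bcond using P1_A A_B by blast
  next
    assume Bcond then show P1 unfolding P1_def using B_P1 by blast
  qed
  have h2: "P2 \<longleftrightarrow> Bcond"
    unfolding P2_def using P2_A B_P2 A_B by blast
  have h3: "P3 \<longleftrightarrow> Bcond"
  proof
    assume P3 then obtain K where "K > 1" "Liminf at_top (\<lambda>t. ereal (\<sigma> (K * t) / \<sigma> t)) > ereal (K powr \<beta>)"
      unfolding P3_def by blast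
    then show Bcond using P3_A A_B by blast
  next
    assume Bcond then show P3 unfolding P3_def using B_P3 by blast
  qed
  have h4: "P4 \<longleftrightarrow> Bcond"
    unfolding P4_def using P4_A B_P4 A_B by blast
  have h5: "P5 \<longleftrightarrow> Bcond"
  proof
    assume P5
    then obtain \<gamma> where g: "\<gamma> > \<beta>" and ai: "if a > 0 then almost_increasing_on {a..} (\<lambda>t. \<sigma> t / t powr \<gamma>)
                  else (\<forall>\<epsilon>>0. almost_increasing_on {\<epsilon>..} (\<lambda>t. \<sigma> t / t powr \<gamma>))"
      unfolding P5_def by blast
    have "\<forall>e>0. almost_increasing_on {e..} (\<lambda>t. \<sigma> t / t powr \<gamma>)"
    proof (cases "a > 0")
      case True
      then show ?thesis using ai ext[of \<gamma> a] g beta by auto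
    next
      case False
      then show ?thesis using ai by auto
    qed
    then show Bcond unfolding Bcond_def using g by blast
  next
    assume Bcond
    then obtain \<gamma> where g: "\<gamma> > \<beta>" "\<forall>e>0. almost_increasing_on {e..} (\<lambda>t. \<sigma> t / t powr \<gamma>)"
      unfolding Bcond_def by blast
    then show P5 unfolding P5_def by (intro exI[of _ \<gamma>]) auto
  qed
  have h6: "P6 \<longleftrightarrow> Bcond"
  proof (cases "a > 0")
    case True
    have P6': "P6 \<longleftrightarrow> (\<exists>C>0. \<forall>y\<ge>a. (\<lambda>t. t powr (\<beta> - 1) / \<sigma> t) integrable_on {y..} \<and>
                  integral {y..} (\<lambda>t. t powr (\<beta> - 1) / \<sigma> t) / y powr \<beta> \<le> C / \<sigma> y)"
      unfolding P6_def using True by simp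
    show ?thesis
    proof
      assume P6
      then obtain C where "C > 0" "\<forall>y\<ge>a. (\<lambda>t. t powr (\<beta> - 1) / \<sigma> t) integrable_on {y..} \<and>
                  integral {y..} (\<lambda>t. t powr (\<beta> - 1) / \<sigma> t) / y powr \<beta> \<le> C / \<sigma> y"
        unfolding P6' by blast
      then show Bcond using P6e_A[of a C] True pos A_B by blast
    next
      assume Bcond
      then show P6 unfolding P6' using B_P6e[of a] True pos by blast
    qed
  next
    case False
    hence a0: "a = 0" using a by simp
    have P6': "P6 \<longleftrightarrow> (\<forall>\<epsilon>>0. \<exists>C>0. \<forall>y\<ge>\<epsilon>. (\<lambda>t. t powr (\<beta> - 1) / \<sigma> t) integrable_on {y..} \<and>
                  integral {y..} (\<lambda>t. t powr (\<beta> - 1) / \<sigma> t) / y powr \<beta> \<le> C / \<sigma> y)"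
      unfolding P6_def using False by simp
    have epos: "\<forall>x\<ge>e. \<sigma> x > 0" if "e > 0" for e using pos a0 that by auto
    show ?thesis
    proof
      assume P6
      then obtain C where "C > 0" "\<forall>y\<ge>1. (\<lambda>t. t powr (\<beta> - 1) / \<sigma> t) integrable_on {y..} \<and>
                  integral {y..} (\<lambda>t. t powr (\<beta> - 1) / \<sigma> t) / y powr \<beta> \<le> C / \<sigma> y"
        unfolding P6' by (meson zero_less_one)
      then show Bcond using P6e_A[of 1 C] epos[of 1] A_B by auto
    next
      assume Bcond
      then show P6 unfolding P6' using B_P6e epos by blast
    qed
  qed
  have h7: "P7 \<longleftrightarrow> Bcond"
  proof
    assume P7 then obtain C where "C > 0" "\<forall>p::nat. 1 \<le> p \<and> a \<le> real p \<longrightarrow>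
              summable (\<lambda>j. real (j + p) powr (\<beta> - 1) / \<sigma> (real (j + p))) \<and>
              (\<Sum>j. real (j + p) powr (\<beta> - 1) / \<sigma> (real (j + p)))
                 \<le> C * real p powr \<beta> / \<sigma> (real p)"
      unfolding P7_def by blast
    then show Bcond using P7_A A_B by blast
  next
    assume Bcond then show P7 unfolding P7_def using B_P7 by blast
  qed
  have h8: "P8 \<longleftrightarrow> Bcond"
    unfolding P8_def using P8_A B_P8 A_B by blast
  have h9: "P9 \<longleftrightarrow> Bcond"
  proof
    assume P9 then obtain k :: nat where "2 \<le> k" "Liminf sequentially (\<lambda>p::nat. ereal (\<sigma> (real k * real p) / \<sigma> (real p)))
                > ereal (real k powr \<beta>)"
      unfolding P9_def by blast
    then show Bcond using P9_A A_B by blast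
  next
    assume Bcond then show P9 unfolding P9_def using B_P8 P8_P9 by blast
  qed
  have h10: "P10 \<longleftrightarrow> Bcond"
  proof
    assume P10 then obtain C where "C > 0" "\<forall>p::nat. 1 \<le> p \<longrightarrow>
              (\<Sum>k=1..p. \<sigma> (real k) / real k powr (1 + \<beta>)) \<le> C * \<sigma> (real p) / real p powr \<beta>"
      unfolding P10_def by blast
    then show Bcond using P10_A A_B by blast
  next
    assume Bcond then show P10 unfolding P10_def using B_P10 by blast
  qed
  show ?thesis using h1 h2 h3 h4 h5 h6 h7 h8 h9 h10 by blast
qed

end
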